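(* Let $n,\ell,a\ge1$ with $na\le\ell$, and for $1\le p\le a$ let $\lambda_p:\mathbb T\to\mathbb T$ be continuous with $\lambda_p(1)=1$ and winding number $w(\lambda_p)\in\mathbb Z$. Let $\varphi:C(\mathbb T)\otimes M_n\to C(\mathbb T)\otimes M_\ell$ be the $*$-homomorphism $f\mapsto\mathrm{diag}(f\circ\lambda_1,\dots,f\circ\lambda_a,0_{\ell-na})$. Then for each $m\ge1$, under the identifications $F_m(C(\mathbb T)\otimes M_n)\cong V^m_n$ and $F_m(C(\mathbb T)\otimes M_\ell)\cong V^m_\ell$, the map $F_m(\varphi):V^m_n\to V^m_\ell$ is $(x,y)\mapsto(ax,by)$, where $b=\sum_{p=1}^a w(\lambda_p)$.
   Context: For a C*-algebra $A$ define $a\cdot b=a+b-ab$; $u\in A$ is a quasi-unitary if $u\cdot u^*=u^*\cdot u=0$, $\widehat{\mathcal U}(A)$ is the topological group of quasi-unitaries, and $F_m(A)=\pi_m(\widehat{\mathcal U}(A))\otimes\mathbb Q$ ($m\ge1$), a functor. $\mathcal U_n$ is the unitary group of $M_n(\mathbb C)$. $V^m_n:=\pi_m(\mathcal U_n)\otimes\mathbb Q\oplus\pi_{m+1}(\mathcal U_n)\otimes\mathbb Q$, whose elements are written as pairs $(x,y)$. The identification $F_m(C(\mathbb T)\otimes M_n)\cong V^m_n$ is the natural one coming from the split exact sequence $0\to C_*(\mathbb T,M_n)\to C(\mathbb T)\otimes M_n\xrightarrow{\mathrm{ev}_1}M_n\to0$ (split by constants), where $C_*(\mathbb T,M_n)=\{f:f(1)=0\}$,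 together with $F_m(M_n)\cong\pi_m(\mathcal U_n)\otimes\mathbb Q$ (via $u\mapsto1-u$) and $F_m(C_*(\mathbb T,M_n))\cong\pi_{m+1}(\mathcal U_n)\otimes\mathbb Q$ (suspension isomorphism). The pair $(a,b)$ is called the signature of $\varphi$. *)

theory Defs
  imports "HOL-Complex_Analysis.Complex_Analysis"
begin

text \<open>Complex k x k matrices, encoded as functions nat => nat => complex that vanish
  outside the index block {..<k} x {..<k}.\<close>
type_synonym cmat = "nat \<Rightarrow> nat \<Rightarrow> complex"

definition idm :: "nat \<Rightarrow> cmat" where
  "idm k = (\<lambda>i j. if i < k \<and> i = j then 1 else 0)"

definition mmult :: "nat \<Rightarrow> cmat \<Rightarrow> cmat \<Rightarrow> cmat" where
  "mmult k A B = (\<lambda>i j. if i < k \<and> j < k then (\<Sum>r<k. A i r * B r j) else 0)"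

definition madj :: "cmat \<Rightarrow> cmat" where
  "madj A = (\<lambda>i j. cnj (A j i))"

definition unitary_mat :: "nat \<Rightarrow> cmat \<Rightarrow> bool" where
  "unitary_mat k U \<longleftrightarrow> (\<forall>i j. \<not> (i < k \<and> j < k) \<longrightarrow> U i j = 0)
     \<and> mmult k U (madj U) = idm k \<and> mmult k (madj U) U = idm k"

fun mpow :: "nat \<Rightarrow> cmat \<Rightarrow> nat \<Rightarrow> cmat" where
  "mpow k A 0 = idm k"
| "mpow k A (Suc N) = mmult k A (mpow k A N)"

text \<open>Integer powers of unitaries (negative powers via the adjoint = inverse).\<close>
definition mzpow :: "nat \<Rightarrow> cmat \<Rightarrow> int \<Rightarrow> cmat" where
  "mzpow k A b = (if 0 \<le> b then mpow k A (nat b) else mpow k (madj A) (nat (- b)))"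

text \<open>Continuity of a matrix-valued map (entrywise = norm topology on M_k).\<close>
definition mcont :: "'x::topological_space set \<Rightarrow> ('x \<Rightarrow> cmat) \<Rightarrow> bool" where
  "mcont S F \<longleftrightarrow> (\<forall>i j. continuous_on S (\<lambda>x. F x i j))"

abbreviation circle :: "complex set" where
  "circle \<equiv> sphere 0 1"

text \<open>Corner inclusion U_k -> U_l, U |-> diag(U, 1_(l-k))
  (i.e. the inclusion M_k -> M_l, x |-> diag(x,0), on quasi-unitaries via u |-> 1-u).\<close>
definition corner :: "nat \<Rightarrow> nat \<Rightarrow> cmat \<Rightarrow> cmat" where
  "corner k l A = (\<lambda>i j. if i < k \<and> j < k then A i j else if i = j \<and> i < l then 1 else 0)"

definition pi_map :: "nat \<Rightarrow> 'v::euclidean_space \<Rightarrow> ('v \<Rightarrow> cmat) \<Rightarrow> bool" where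
  "pi_map k e f \<longleftrightarrow> mcont (sphere 0 1) f \<and> (\<forall>s\<in>sphere 0 1. unitary_mat k (f s)) \<and> f e = idm k"

definition pi_htp :: "nat \<Rightarrow> 'v::euclidean_space \<Rightarrow> ('v \<Rightarrow> cmat) \<Rightarrow> ('v \<Rightarrow> cmat) \<Rightarrow> bool" where
  "pi_htp k e f g \<longleftrightarrow> (\<exists>H :: real \<times> 'v \<Rightarrow> cmat.
      mcont ({0..1} \<times> sphere 0 1) H
      \<and> (\<forall>t\<in>{0..1}. \<forall>s\<in>sphere 0 1. unitary_mat k (H (t, s)))
      \<and> (\<forall>s\<in>sphere 0 1. H (0, s) = f s \<and> H (1, s) = g s)
      \<and> (\<forall>t\<in>{0..1}. H (t, e) = idm k))"

text \<open>[f] (x) 1 = [g] (x) 1 in pi_m(U_k) (x) Q  iff  N[f] = N[g] for some N > 0;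
  in a topological group N[f] is represented by the pointwise power f^N.\<close>
definition pi_rat_eq :: "nat \<Rightarrow> 'v::euclidean_space \<Rightarrow> ('v \<Rightarrow> cmat) \<Rightarrow> ('v \<Rightarrow> cmat) \<Rightarrow> bool" where
  "pi_rat_eq k e f g \<longleftrightarrow> (\<exists>N>0. pi_htp k e (\<lambda>s. mpow k (f s) N) (\<lambda>s. mpow k (g s) N))"

subsection \<open>Based maps S^m -> quasi-unitaries of C_*(T, M_k) and their rational classes\<close>

text \<open>Written on the unitary level u |-> 1 - u: maps G : S^m x T -> U_k with G(s,1) = 1
  and G(e,z) = 1, jointly continuous (= continuous into C(T,M_k) with sup norm).\<close>
definition cs_map :: "nat \<Rightarrow> 'v::euclidean_space \<Rightarrow> ('v \<times> complex \<Rightarrow> cmat) \<Rightarrow> bool" where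
  "cs_map k e G \<longleftrightarrow> mcont (sphere 0 1 \<times> circle) G
     \<and> (\<forall>s\<in>sphere 0 1. \<forall>z\<in>circle. unitary_mat k (G (s, z)))
     \<and> (\<forall>s\<in>sphere 0 1. G (s, 1) = idm k) \<and> (\<forall>z\<in>circle. G (e, z) = idm k)"

definition cs_htp :: "nat \<Rightarrow> 'v::euclidean_space \<Rightarrow> ('v \<times> complex \<Rightarrow> cmat) \<Rightarrow> ('v \<times> complex \<Rightarrow> cmat) \<Rightarrow> bool" where
  "cs_htp k e F G \<longleftrightarrow> (\<exists>H :: real \<times> 'v \<times> complex \<Rightarrow> cmat.
      mcont ({0..1} \<times> sphere 0 1 \<times> circle) H
      \<and> (\<forall>t\<in>{0..1}. \<forall>s\<in>sphere 0 1. \<forall>z\<in>circle. unitary_mat k (H (t, s, z)))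
      \<and> (\<forall>s\<in>sphere 0 1. \<forall>z\<in>circle. H (0, s, z) = F (s, z) \<and> H (1, s, z) = G (s, z))
      \<and> (\<forall>t\<in>{0..1}. \<forall>s\<in>sphere 0 1. H (t, s, 1) = idm k)
      \<and> (\<forall>t\<in>{0..1}. \<forall>z\<in>circle. H (t, e, z) = idm k))"

definition cs_rat_eq :: "nat \<Rightarrow> 'v::euclidean_space \<Rightarrow> ('v \<times> complex \<Rightarrow> cmat) \<Rightarrow> ('v \<times> complex \<Rightarrow> cmat) \<Rightarrow> bool" where
  "cs_rat_eq k e F G \<longleftrightarrow> (\<exists>N>0. cs_htp k e (\<lambda>x. mpow k (F x) N) (\<lambda>x. mpow k (G x) N))"

subsection \<open>Based maps S^m -> quasi-unitaries of C(T) (x) M_k (unitary level)\<close>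

definition ct_map :: "nat \<Rightarrow> 'v::euclidean_space \<Rightarrow> ('v \<times> complex \<Rightarrow> cmat) \<Rightarrow> bool" where
  "ct_map k e U \<longleftrightarrow> mcont (sphere 0 1 \<times> circle) U
     \<and> (\<forall>s\<in>sphere 0 1. \<forall>z\<in>circle. unitary_mat k (U (s, z)))
     \<and> (\<forall>z\<in>circle. U (e, z) = idm k)"

text \<open>Coordinates in V^m_k = pi_m(U_k)(x)Q (+) pi_m(Uhat(C_*(T,M_k)))(x)Q of the class of U,
  coming from the split exact sequence (split by constants): x = ev_1 U,
  y = U * (const (ev_1 U))^(-1)  (unitary-level product corresponds to the quasi-product).\<close>
definition xcoord :: "('v \<times> complex \<Rightarrow> cmat) \<Rightarrow> 'v \<Rightarrow> cmat" where
  "xcoord U = (\<lambda>s. U (s, 1))"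

definition ycoord :: "nat \<Rightarrow> ('v \<times> complex \<Rightarrow> cmat) \<Rightarrow> 'v \<times> complex \<Rightarrow> cmat" where
  "ycoord k U = (\<lambda>(s, z). mmult k (U (s, z)) (madj (U (s, 1))))"

text \<open>The *-homomorphism phi(f) = diag(f o lam_0, ..., f o lam_(a-1), 0_(l-na)),
  transported to the unitary level: U |-> 1 - phi(1 - U) = diag(U o lam_p, 1_(l-na)).\<close>
definition phi_u :: "nat \<Rightarrow> nat \<Rightarrow> nat \<Rightarrow> (nat \<Rightarrow> complex \<Rightarrow> complex)
    \<Rightarrow> ('v \<times> complex \<Rightarrow> cmat) \<Rightarrow> 'v \<times> complex \<Rightarrow> cmat" where
  "phi_u n l a lam U = (\<lambda>(s, z) i j.
     if i < n * a \<and> j < n * a \<and> i div n = j div n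
     then U (s, lam (i div n) z) (i mod n) (j mod n)
     else if i = j \<and> i < l then 1 else 0)"

definition wind :: "(complex \<Rightarrow> complex) \<Rightarrow> int" where
  "wind g = (THE k::int. winding_number (g \<circ> circlepath 0 1) 0 = of_int k)"

end

theory Submission
  imports Defs
begin

definition mwf :: "nat \<Rightarrow> cmat \<Rightarrow> bool" where
  "mwf k A \<longleftrightarrow> (\<forall>i j. \<not> (i < k \<and> j < k) \<longrightarrow> A i j = 0)"

lemma mmult_wf[simp]: "mwf k (mmult k A B)" by (simp add: mwf_def mmult_def)
lemma idm_wf[simp]: "mwf k (idm k)" by (simp add: mwf_def idm_def)
lemma unitary_wf: "unitary_mat k U \<Longrightarrow> mwf k U" by (simp add: mwf_def unitary_mat_def)

lemma madj_wf: "mwf k A \<Longrightarrow> mwf k (madj A)" by (auto simp add: mwf_def madj_def)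

lemma delta_l: "(if P then 1 else 0) * (x::complex) = (if P then x else 0)" by simp
lemma delta_r: "(x::complex) * (if P then 1 else 0) = (if P then x else 0)" by simp

lemma mmult_idm_left: "mwf k A \<Longrightarrow> mmult k (idm k) A = A"
  by (auto simp: mmult_def idm_def mwf_def fun_eq_iff delta_l)

lemma mmult_idm_right: "mwf k A \<Longrightarrow> mmult k A (idm k) = A"
  by (auto simp: mmult_def idm_def mwf_def fun_eq_iff delta_r)

lemma mmult_assoc: "mmult k (mmult k A B) C = mmult k A (mmult k B C)"
proof (rule ext, rule ext)
  fix i j
  show "mmult k (mmult k A B) C i j = mmult k A (mmult k B C) i j"
  proof (cases "i < k \<and> j < k")
    case True
    have "mmult k (mmult k A B) C i j = (\<Sum>r<k. (\<Sum>q<k. A i q * B q r) * C r j)"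
      using True by (simp add: mmult_def)
    also have "\<dots> = (\<Sum>r<k. \<Sum>q<k. A i q * B q r * C r j)"
      by (simp add: sum_distrib_right)
    also have "\<dots> = (\<Sum>q<k. \<Sum>r<k. A i q * B q r * C r j)"
      by (rule sum.swap)
    also have "\<dots> = (\<Sum>q<k. A i q * (\<Sum>r<k. B q r * C r j))"
      by (simp add: sum_distrib_left mult.assoc)
    also have "\<dots> = mmult k A (mmult k B C) i j"
      using True by (simp add: mmult_def)
    finally show ?thesis .
  qed (auto simp: mmult_def)
qed

lemma madj_madj[simp]: "madj (madj A) = A" by (simp add: madj_def)
lemma madj_idm[simp]: "madj (idm k) = idm k" by (auto simp: madj_def idm_def fun_eq_iff)

lemma madj_mmult: "madj (mmult k A B) = mmult k (madj B) (madj A)"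
  by (auto simp: madj_def mmult_def fun_eq_iff mult.commute)

lemma unitary_iff: "unitary_mat k U \<longleftrightarrow> mwf k U \<and> mmult k U (madj U) = idm k \<and> mmult k (madj U) U = idm k"
  by (simp add: unitary_mat_def mwf_def)

lemma unitary_idm[simp]: "unitary_mat k (idm k)"
  by (simp add: unitary_iff mmult_idm_left)

lemma unitary_madj: "unitary_mat k U \<Longrightarrow> unitary_mat k (madj U)"
  by (simp add: unitary_iff madj_wf)

lemma unitary_mmult: assumes "unitary_mat k U" "unitary_mat k V" shows "unitary_mat k (mmult k U V)"
proof -
  have w: "mwf k U" "mwf k V" "mwf k (madj U)" "mwf k (madj V)" using assms unitary_wf unitary_madj by auto
  have a: "mmult k U (madj U) = idm k" "mmult k (madj U) U = idm k" "mmult k V (madj V) = idm k" "mmult k (madj V) V = idm k"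
    using assms by (auto simp: unitary_iff)
  have "mmult k (mmult k U V) (madj (mmult k U V)) = mmult k U (mmult k (mmult k V (madj V)) (madj U))"
    by (simp add: madj_mmult mmult_assoc)
  also have "\<dots> = idm k" using a w by (simp add: mmult_idm_left)
  finally have 1: "mmult k (mmult k U V) (madj (mmult k U V)) = idm k" .
  have "mmult k (madj (mmult k U V)) (mmult k U V) = mmult k (madj V) (mmult k (mmult k (madj U) U) V)"
    by (simp add: madj_mmult mmult_assoc)
  also have "\<dots> = idm k" using a w by (simp add: mmult_idm_left)
  finally show ?thesis using 1 by (simp add: unitary_iff)
qed

lemma mpow_wf[simp]: "mwf k (mpow k A N)" by (cases N) auto

lemma unitary_mpow: "unitary_mat k U \<Longrightarrow> unitary_mat k (mpow k U N)"
  by (induction N) (auto intro: unitary_mmult)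

lemma unitary_mzpow: "unitary_mat k U \<Longrightarrow> unitary_mat k (mzpow k U b)"
  by (simp add: mzpow_def unitary_mpow unitary_madj)

lemma mpow_one: "mwf k A \<Longrightarrow> mpow k A 1 = A"
  by (simp add: mmult_idm_right)

lemma mpow_comm: "mmult k (mpow k A N) A = mmult k A (mpow k A N)"
proof (induction N)
  case 0 then show ?case by (auto simp add: mmult_def idm_def fun_eq_iff delta_l delta_r)
next
  case (Suc N)
  then show ?case by (simp add: mmult_assoc)
qed

lemma madj_mpow: "madj (mpow k A N) = mpow k (madj A) N"
proof (induction N)
  case (Suc N)
  have "madj (mpow k A (Suc N)) = mmult k (madj (mpow k A N)) (madj A)" by (simp add: madj_mmult)
  also have "\<dots> = mmult k (mpow k (madj A) N) (madj A)" using Suc by simp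
  also have "\<dots> = mpow k (madj A) (Suc N)" by (simp add: mpow_comm)
  finally show ?case .
qed simp

lemma mpow_madj_cancel: assumes "unitary_mat k U"
  shows "mmult k (mpow k U N) (mpow k (madj U) N) = idm k"
proof -
  have "mpow k (madj U) N = madj (mpow k U N)" by (simp add: madj_mpow)
  then show ?thesis using unitary_mpow[OF assms] by (simp add: unitary_iff)
qed

lemma mcont_const[simp]: "mcont S (\<lambda>x. A)" by (simp add: mcont_def)

lemma mcont_subset: "mcont T F \<Longrightarrow> S \<subseteq> T \<Longrightarrow> mcont S F"
  by (auto simp: mcont_def intro: continuous_on_subset)

lemma mcont_mmult: "mcont S F \<Longrightarrow> mcont S G \<Longrightarrow> mcont S (\<lambda>x. mmult k (F x) (G x))"
  unfolding mcont_def mmult_def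
proof (intro allI)
  fix i j assume "\<forall>i j. continuous_on S (\<lambda>x. F x i j)" "\<forall>i j. continuous_on S (\<lambda>x. G x i j)"
  then show "continuous_on S (\<lambda>x. if i < k \<and> j < k then \<Sum>r<k. F x i r * G x r j else 0)"
    by (cases "i < k \<and> j < k") (auto intro!: continuous_intros)
qed

lemma mcont_madj: "mcont S F \<Longrightarrow> mcont S (\<lambda>x. madj (F x))"
  unfolding mcont_def madj_def
  by (auto intro!: continuous_intros)

lemma mcont_mpow: "mcont S F \<Longrightarrow> mcont S (\<lambda>x. mpow k (F x) N)"
  by (induction N) (auto intro: mcont_mmult)

lemma mcont_mzpow: "mcont S F \<Longrightarrow> mcont S (\<lambda>x. mzpow k (F x) b)"
  by (cases "0 \<le> b") (auto simp: mzpow_def intro: mcont_mpow mcont_madj)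

lemma mcont_corner: "mcont S F \<Longrightarrow> mcont S (\<lambda>x. corner k l (F x))"
  unfolding mcont_def corner_def
proof (intro allI)
  fix i j assume "\<forall>i j. continuous_on S (\<lambda>x. F x i j)"
  then show "continuous_on S (\<lambda>x. if i < k \<and> j < k then F x i j else if i = j \<and> i < l then 1 else 0)"
    by (cases "i < k \<and> j < k") (auto intro!: continuous_intros)
qed

lemma mcont_compose: "mcont T F \<Longrightarrow> continuous_on S g \<Longrightarrow> g ` S \<subseteq> T \<Longrightarrow> mcont S (\<lambda>x. F (g x))"
  unfolding mcont_def
proof (intro allI)
  fix i j assume "\<forall>i j. continuous_on T (\<lambda>x. F x i j)" "continuous_on S g" "g ` S \<subseteq> T"
  then show "continuous_on S (\<lambda>x. F (g x) i j)"
    using continuous_on_compose2[of T "\<lambda>y. F y i j" S g] by blast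
qed

lemma mcont_cong: "mcont S F \<Longrightarrow> (\<And>x. x \<in> S \<Longrightarrow> F x = G x) \<Longrightarrow> mcont S G"
  unfolding mcont_def by (metis (mono_tags, lifting) continuous_on_cong)

definition valid :: "nat \<Rightarrow> 'x::topological_space set \<Rightarrow> 'x set \<Rightarrow> ('x \<Rightarrow> cmat) \<Rightarrow> bool" where
  "valid k X B F \<longleftrightarrow> mcont X F \<and> (\<forall>x\<in>X. unitary_mat k (F x)) \<and> (\<forall>x\<in>B. F x = idm k)"

definition ghtp :: "nat \<Rightarrow> 'x::topological_space set \<Rightarrow> 'x set \<Rightarrow> ('x \<Rightarrow> cmat) \<Rightarrow> ('x \<Rightarrow> cmat) \<Rightarrow> bool" where
  "ghtp k X B F G \<longleftrightarrow> (\<exists>H :: real \<times> 'x \<Rightarrow> cmat. mcont ({0..1::real} \<times> X) H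
      \<and> (\<forall>t\<in>{0..1}. \<forall>x\<in>X. unitary_mat k (H (t, x)))
      \<and> (\<forall>x\<in>X. H (0, x) = F x \<and> H (1, x) = G x)
      \<and> (\<forall>t\<in>{0..1}. \<forall>x\<in>B. H (t, x) = idm k))"

lemma ghtpI:
  assumes "mcont ({0..1::real} \<times> X) H" "\<And>t x. t \<in> {0..1} \<Longrightarrow> x \<in> X \<Longrightarrow> unitary_mat k (H (t, x))"
    "\<And>x. x \<in> X \<Longrightarrow> H (0, x) = F x" "\<And>x. x \<in> X \<Longrightarrow> H (1, x) = G x"
    "\<And>t x. t \<in> {0..1} \<Longrightarrow> x \<in> B \<Longrightarrow> H (t, x) = idm k"
  shows "ghtp k X B F G"
  unfolding ghtp_def apply (rule exI[of _ H]) using assms by auto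

lemma ghtp_refl: assumes "valid k X B F" shows "ghtp k X B F F"
proof (rule ghtpI[where H="\<lambda>p. F (snd p)"])
  show "mcont ({0..1::real} \<times> X) (\<lambda>p. F (snd p))"
    using assms by (auto simp: valid_def intro!: mcont_compose[where T=X] continuous_intros)
qed (use assms in \<open>auto simp: valid_def\<close>)

lemma ghtp_sym: assumes "ghtp k X B F G" shows "ghtp k X B G F"
proof -
  obtain H where H: "mcont ({0..1::real} \<times> X) H" "\<forall>t\<in>{0..1}. \<forall>x\<in>X. unitary_mat k (H (t, x))"
      "\<forall>x\<in>X. H (0, x) = F x \<and> H (1, x) = G x" "\<forall>t\<in>{0..1}. \<forall>x\<in>B. H (t, x) = idm k"
    using assms unfolding ghtp_def by blast
  show ?thesis
  proof (rule ghtpI[where H="\<lambda>p. H (1 - fst p, snd p)"])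
    show "mcont ({0..1::real} \<times> X) (\<lambda>p. H (1 - fst p, snd p))"
      using H(1) by (rule mcont_compose) (auto intro!: continuous_intros)
  qed (use H in auto)
qed

lemma ghtp_trans: assumes "ghtp k X B F G" "ghtp k X B G K" shows "ghtp k X B F K"
proof -
  obtain H1 where H1: "mcont ({0..1::real} \<times> X) H1" "\<forall>t\<in>{0..1}. \<forall>x\<in>X. unitary_mat k (H1 (t, x))"
      "\<forall>x\<in>X. H1 (0, x) = F x \<and> H1 (1, x) = G x" "\<forall>t\<in>{0..1}. \<forall>x\<in>B. H1 (t, x) = idm k"
    using assms(1) unfolding ghtp_def by blast
  obtain H2 where H2: "mcont ({0..1::real} \<times> X) H2" "\<forall>t\<in>{0..1}. \<forall>x\<in>X. unitary_mat k (H2 (t, x))"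
      "\<forall>x\<in>X. H2 (0, x) = G x \<and> H2 (1, x) = K x" "\<forall>t\<in>{0..1}. \<forall>x\<in>B. H2 (t, x) = idm k"
    using assms(2) unfolding ghtp_def by blast
  let ?H = "\<lambda>p. if fst p \<le> 1/2 then H1 (2 * fst p, snd p) else H2 (2 * fst p - 1, snd p)"
  show ?thesis
  proof (rule ghtpI[where H="?H"])
    have c1: "mcont {p \<in> {0..1::real} \<times> X. fst p \<le> 1/2} (\<lambda>p. H1 (2 * fst p, snd p))"
      using H1(1) by (rule mcont_compose) (auto intro!: continuous_intros)
    have c2: "mcont {p \<in> {0..1::real} \<times> X. 1/2 \<le> fst p} (\<lambda>p. H2 (2 * fst p - 1, snd p))"
      using H2(1) by (rule mcont_compose) (auto intro!: continuous_intros)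
    show "mcont ({0..1::real} \<times> X) ?H"
      unfolding mcont_def
    proof (intro allI)
      fix i j
      show "continuous_on ({0..1::real} \<times> X) (\<lambda>p. ?H p i j)"
        unfolding if_distrib[of "\<lambda>A. A i j"]
        apply (rule continuous_on_cases_le)
        subgoal using c1 by (simp add: mcont_def)
        subgoal using c2 by (simp add: mcont_def)
        subgoal by (intro continuous_intros)
        subgoal for p
        proof -
          assume p: "p \<in> {0..1} \<times> X" "fst p = 1/2"
          then have "2 * fst p = 1" "2 * fst p - 1 = 0" by auto
          then show ?thesis using H1(3) H2(3) p by (cases p) auto
        qed
        done
    qed
  qed (use H1 H2 in auto)
qed

lemma ghtp_mult: assumes "ghtp k X B F G" "ghtp k X B F' G'"
  shows "ghtp k X B (\<lambda>x. mmult k (F x) (F' x)) (\<lambda>x. mmult k (G x) (G' x))"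
proof -
  obtain H1 where H1: "mcont ({0..1::real} \<times> X) H1" "\<forall>t\<in>{0..1}. \<forall>x\<in>X. unitary_mat k (H1 (t, x))"
      "\<forall>x\<in>X. H1 (0, x) = F x \<and> H1 (1, x) = G x" "\<forall>t\<in>{0..1}. \<forall>x\<in>B. H1 (t, x) = idm k"
    using assms(1) unfolding ghtp_def by blast
  obtain H2 where H2: "mcont ({0..1::real} \<times> X) H2" "\<forall>t\<in>{0..1}. \<forall>x\<in>X. unitary_mat k (H2 (t, x))"
      "\<forall>x\<in>X. H2 (0, x) = F' x \<and> H2 (1, x) = G' x" "\<forall>t\<in>{0..1}. \<forall>x\<in>B. H2 (t, x) = idm k"
    using assms(2) unfolding ghtp_def by blast
  show ?thesis
    by (rule ghtpI[where H="\<lambda>p. mmult k (H1 p) (H2 p)"])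
       (use H1 H2 in \<open>auto intro: mcont_mmult unitary_mmult simp: mmult_idm_left\<close>)
qed

lemma ghtp_map:
  fixes X :: "'x::topological_space set"
  assumes "ghtp k X B F G"
    and "\<And>(H :: real \<times> 'x \<Rightarrow> cmat). mcont ({0..1::real} \<times> X) H \<Longrightarrow> mcont ({0..1::real} \<times> X) (\<lambda>x. \<Phi> (H x))"
    and "\<And>A. unitary_mat k A \<Longrightarrow> unitary_mat k' (\<Phi> A)"
    and "\<Phi> (idm k) = idm k'"
  shows "ghtp k' X B (\<lambda>x. \<Phi> (F x)) (\<lambda>x. \<Phi> (G x))"
proof -
  obtain H1 where H1: "mcont ({0..1::real} \<times> X) H1" "\<forall>t\<in>{0..1}. \<forall>x\<in>X. unitary_mat k (H1 (t, x))"
      "\<forall>x\<in>X. H1 (0, x) = F x \<and> H1 (1, x) = G x" "\<forall>t\<in>{0..1}. \<forall>x\<in>B. H1 (t, x) = idm k"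
    using assms(1) unfolding ghtp_def by blast
  show ?thesis
    by (rule ghtpI[where H="\<lambda>p. \<Phi> (H1 p)"]) (use H1 assms(2-4) in auto)
qed

lemma ghtp_cong: assumes "ghtp k X B F G" "\<And>x. x \<in> X \<Longrightarrow> F x = F' x" "\<And>x. x \<in> X \<Longrightarrow> G x = G' x"
  shows "ghtp k X B F' G'"
  using assms unfolding ghtp_def by (metis)

lemma ghtp_valid: assumes "ghtp k X B F G" "B \<subseteq> X" shows "valid k X B F" "valid k X B G"
proof -
  obtain H1 where H1: "mcont ({0..1::real} \<times> X) H1" "\<forall>t\<in>{0..1}. \<forall>x\<in>X. unitary_mat k (H1 (t, x))"
      "\<forall>x\<in>X. H1 (0, x) = F x \<and> H1 (1, x) = G x" "\<forall>t\<in>{0..1}. \<forall>x\<in>B. H1 (t, x) = idm k"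
    using assms(1) unfolding ghtp_def by blast
  have "mcont X (\<lambda>x. H1 (0, x))" "mcont X (\<lambda>x. H1 (1, x))"
    by (rule mcont_compose[OF H1(1)]; auto intro!: continuous_intros)+
  moreover have "\<forall>x\<in>X. unitary_mat k (F x)" "\<forall>x\<in>X. unitary_mat k (G x)"
    using H1(2)[rule_format, of 0] H1(2)[rule_format, of 1] H1(3) by auto
  moreover have "\<forall>x\<in>B. F x = idm k" "\<forall>x\<in>B. G x = idm k"
    using H1(4)[rule_format, of 0] H1(4)[rule_format, of 1] H1(3) assms(2) by (metis atLeastAtMost_iff order_refl zero_le_one subsetD)+
  ultimately show "valid k X B F" "valid k X B G"
    unfolding valid_def using H1(3) by (auto intro: mcont_cong)
qed

lemma valid_mult: "valid k X B F \<Longrightarrow> valid k X B G \<Longrightarrow> valid k X B (\<lambda>x. mmult k (F x) (G x))"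
  by (auto simp: valid_def intro: mcont_mmult unitary_mmult simp: mmult_idm_left)

lemma valid_madj: "valid k X B F \<Longrightarrow> valid k X B (\<lambda>x. madj (F x))"
  by (auto simp: valid_def intro: mcont_madj unitary_madj)

lemma valid_idm: "valid k X B (\<lambda>x. idm k)"
  by (auto simp: valid_def)

lemma pi_htp_ghtp: "pi_htp k e f g \<longleftrightarrow> ghtp k (sphere 0 1) {e} f g"
  unfolding pi_htp_def ghtp_def by auto

lemma cs_htp_ghtp: assumes "e \<in> sphere 0 1"
  shows "cs_htp k e F G \<longleftrightarrow> ghtp k (sphere 0 1 \<times> circle) (sphere 0 1 \<times> {1} \<union> {e} \<times> circle) F G"
  unfolding cs_htp_def ghtp_def using assms by (auto 0 3)

definition bd :: "nat \<Rightarrow> nat \<Rightarrow> nat \<Rightarrow> (nat \<Rightarrow> cmat) \<Rightarrow> cmat" where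
  "bd n l a A = (\<lambda>i j. if i < n * a \<and> j < n * a \<and> i div n = j div n
     then A (i div n) (i mod n) (j mod n) else if i = j \<and> i < l then 1 else 0)"

lemma phi_u_bd: "phi_u n l a lam U (s, z) = bd n l a (\<lambda>p. U (s, lam p z))"
  by (simp add: phi_u_def bd_def)

lemma bd_wf: "n * a \<le> l \<Longrightarrow> mwf l (bd n l a A)"
  by (auto simp: mwf_def bd_def)

lemma bd_cong: "(\<And>p. p < a \<Longrightarrow> A p = A' p) \<Longrightarrow> 0 < n \<Longrightarrow> bd n l a A = bd n l a A'"
  unfolding bd_def by (auto simp: fun_eq_iff less_mult_imp_div_less mult.commute)

lemma block_reindex:
  fixes g :: "nat \<Rightarrow> complex"
  assumes "q < a" "n * a \<le> l" "0 < n"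
  shows "(\<Sum>r<l. if r < n * a \<and> r div n = q then g r else 0) = (\<Sum>r'<n. g (q * n + r'))"
proof -
  have "(\<Sum>r<l. if r < n * a \<and> r div n = q then g r else 0) = (\<Sum>r\<in>{r. r < l \<and> r < n * a \<and> r div n = q}. g r)"
    by (simp add: sum.If_cases Int_def)
  also have "{r. r < l \<and> r < n * a \<and> r div n = q} = (\<lambda>r'. q * n + r') ` {..<n}"
  proof (rule set_eqI, rule iffI)
    fix r assume r: "r \<in> {r. r < l \<and> r < n * a \<and> r div n = q}"
    then have "r = q * n + r mod n" using div_mult_mod_eq[of r n] by simp
    moreover have "r mod n \<in> {..<n}" using assms(3) by simp
    ultimately show "r \<in> (\<lambda>r'. q * n + r') ` {..<n}" by (rule image_eqI)
  next
    fix r assume "r \<in> (\<lambda>r'. q * n + r') ` {..<n}"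
    then obtain r' where r': "r' < n" "r = q * n + r'" by auto
    have "q * n + r' < n * a"
    proof -
      have "q * n + r' < q * n + n" using r' by simp
      also have "\<dots> = (q + 1) * n" by simp
      also have "\<dots> \<le> a * n" using assms(1) by (intro mult_right_mono) auto
      finally show ?thesis by (simp add: mult.commute)
    qed
    moreover have "(q * n + r') div n = q" using r' by simp
    ultimately show "r \<in> {r. r < l \<and> r < n * a \<and> r div n = q}" using r' assms by simp
  qed
  also have "(\<Sum>r\<in>(\<lambda>r'. q * n + r') ` {..<n}. g r) = (\<Sum>r'<n. g (q * n + r'))"
    by (rule sum.reindex_cong[where l="\<lambda>r'. q * n + r'"]) (auto simp: inj_on_def)
  finally show ?thesis .
qed

lemma block_bound: fixes q a n r' :: nat assumes "q < a" "r' < n" shows "q * n + r' < n * a"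
proof -
  have "q * n + r' < q * n + n" using assms by simp
  also have "\<dots> = (q + 1) * n" by simp
  also have "\<dots> \<le> a * n" using assms(1) by (intro mult_right_mono) auto
  finally show ?thesis by (simp add: mult.commute)
qed

lemma bd_row:
  assumes "i < n * a" "n * a \<le> l" "0 < n"
  shows "(\<Sum>r<l. bd n l a A i r * X r) = (\<Sum>r'<n. A (i div n) (i mod n) r' * X ((i div n) * n + r'))"
proof -
  have q: "i div n < a" using assms by (simp add: less_mult_imp_div_less mult.commute)
  have "(\<Sum>r<l. bd n l a A i r * X r) = (\<Sum>r<l. if r < n * a \<and> r div n = i div n then A (i div n) (i mod n) (r mod n) * X r else 0)"
    by (rule sum.cong) (use assms in \<open>auto simp: bd_def\<close>)
  also have "\<dots> = (\<Sum>r'<n. A (i div n) (i mod n) ((i div n * n + r') mod n) * X (i div n * n + r'))"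
    by (rule block_reindex[OF q assms(2,3)])
  also have "\<dots> = (\<Sum>r'<n. A (i div n) (i mod n) r' * X ((i div n) * n + r'))"
    by (rule sum.cong) auto
  finally show ?thesis .
qed

lemma bd_mult:
  assumes "n * a \<le> l" "0 < n"
  shows "mmult l (bd n l a A) (bd n l a B) = bd n l a (\<lambda>p. mmult n (A p) (B p))"
proof (intro ext)
  fix i j
  show "mmult l (bd n l a A) (bd n l a B) i j = bd n l a (\<lambda>p. mmult n (A p) (B p)) i j"
  proof (cases "i < l \<and> j < l")
    case False
    then show ?thesis using assms by (auto simp: mmult_def bd_def)
  next
    case ij: True
    show ?thesis
    proof (cases "i < n * a")
      case True
      let ?q = "i div n"
      have q: "?q < a" using True assms by (simp add: less_mult_imp_div_less mult.commute)
      have "mmult l (bd n l a A) (bd n l a B) i j = (\<Sum>r'<n. A ?q (i mod n) r' * bd n l a B (?q * n + r') j)"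
        using ij bd_row[OF True assms] by (simp add: mmult_def)
      also have "\<dots> = (\<Sum>r'<n. A ?q (i mod n) r' * (if j < n * a \<and> j div n = ?q then B ?q r' (j mod n) else 0))"
      proof (rule sum.cong[OF refl])
        fix r' assume r': "r' \<in> {..<n}"
        have b: "?q * n + r' < n * a" using block_bound[OF q] r' by simp
        have d: "(?q * n + r') div n = ?q" "(?q * n + r') mod n = r'" using r' assms by auto
        have "?q * n + r' = j \<Longrightarrow> j div n = ?q" using d by auto
        then show "A ?q (i mod n) r' * bd n l a B (?q * n + r') j = A ?q (i mod n) r' * (if j < n * a \<and> j div n = ?q then B ?q r' (j mod n) else 0)"
          using b d by (auto simp: bd_def)
      qed
      also have "\<dots> = bd n l a (\<lambda>p. mmult n (A p) (B p)) i j"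
        using True assms by (auto simp: bd_def mmult_def)
      finally show ?thesis .
    next
      case False
      have "mmult l (bd n l a A) (bd n l a B) i j = (\<Sum>r<l. (if r = i then 1 else 0) * bd n l a B r j)"
        using ij False by (auto simp: mmult_def bd_def intro!: sum.cong)
      also have "\<dots> = bd n l a B i j" using ij by (simp add: delta_l)
      also have "\<dots> = bd n l a (\<lambda>p. mmult n (A p) (B p)) i j" using False by (simp add: bd_def)
      finally show ?thesis .
    qed
  qed
qed

lemma bd_madj: "madj (bd n l a A) = bd n l a (\<lambda>p. madj (A p))"
  by (auto simp: bd_def madj_def fun_eq_iff)

lemma div_mod_inj: "(i::nat) div n = j div n \<Longrightarrow> i mod n = j mod n \<Longrightarrow> i = j"
  by (metis div_mult_mod_eq)

lemma bd_idm: assumes "0 < n" "n * a \<le> l" shows "bd n l a (\<lambda>p. idm n) = idm l"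
  unfolding bd_def idm_def fun_eq_iff
proof (intro allI)
  fix i j
  show "(if i < n * a \<and> j < n * a \<and> i div n = j div n then (if i mod n < n \<and> i mod n = j mod n then 1 else 0) else if i = j \<and> i < l then 1 else 0) =
        (if i < l \<and> i = j then 1 else 0)"
  proof (cases "i < n * a \<and> j < n * a \<and> i div n = j div n")
    case True
    then show ?thesis using assms div_mod_inj[of i n j] by auto
  next
    case False
    then show ?thesis by auto
  qed
qed

lemma corner_bd: assumes "0 < n" "1 \<le> a" "n * a \<le> l"
  shows "corner n l A = bd n l a (\<lambda>q. if q = 0 then A else idm n)"
proof -
  have na: "n \<le> n * a" using assms by simp
  show ?thesis unfolding corner_def bd_def idm_def fun_eq_iff
  proof (intro allI)
    fix i j
    show "(if i < n \<and> j < n then A i j else if i = j \<and> i < l then 1 else 0) =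
      (if i < n * a \<and> j < n * a \<and> i div n = j div n then (if i div n = 0 then A else (\<lambda>i j. if i < n \<and> i = j then 1 else 0)) (i mod n) (j mod n)
       else if i = j \<and> i < l then 1 else 0)"
    proof (cases "i < n \<and> j < n")
      case True
      have "i < n * a" "j < n * a" using True na by (meson less_le_trans)+
      moreover have "i div n = 0" "j div n = 0" "i mod n = i" "j mod n = j" using True by auto
      ultimately show ?thesis using True by simp
    next
      case False
      show ?thesis
      proof (cases "i < n * a \<and> j < n * a \<and> i div n = j div n")
        case True
        then have "i div n \<noteq> 0" using False assms(1) by (auto simp: div_eq_0_iff)
        then show ?thesis using True False assms div_mod_inj[of i n j] by auto
      next
        case F2: False
        then show ?thesis using False by auto
      qed
    qed
  qed
qed

fun mprod :: "nat \<Rightarrow> (nat \<Rightarrow> cmat) \<Rightarrow> nat \<Rightarrow> cmat" where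
  "mprod k F 0 = idm k"
| "mprod k F (Suc m) = mmult k (F m) (mprod k F m)"

definition Ep :: "nat \<Rightarrow> nat \<Rightarrow> nat \<Rightarrow> nat \<Rightarrow> cmat \<Rightarrow> cmat" where
  "Ep n l a p A = bd n l a (\<lambda>q. if q = p then A else idm n)"

lemma bd_as_prod:
  assumes "n * a \<le> l" "0 < n" "\<And>q. q < a \<Longrightarrow> mwf n (A q)" "m \<le> a"
  shows "mprod l (\<lambda>p. Ep n l a p (A p)) m = bd n l a (\<lambda>q. if q < m then A q else idm n)"
  using assms(4)
proof (induction m)
  case 0
  then show ?case using assms by (simp add: bd_idm)
next
  case (Suc m)
  have "mprod l (\<lambda>p. Ep n l a p (A p)) (Suc m) = mmult l (Ep n l a m (A m)) (bd n l a (\<lambda>q. if q < m then A q else idm n))"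
    using Suc by simp
  also have "\<dots> = bd n l a (\<lambda>q. mmult n (if q = m then A m else idm n) (if q < m then A q else idm n))"
    unfolding Ep_def using assms by (simp add: bd_mult)
  also have "\<dots> = bd n l a (\<lambda>q. if q < Suc m then A q else idm n)"
  proof (rule bd_cong)
    fix p assume p: "p < a"
    show "mmult n (if p = m then A m else idm n) (if p < m then A p else idm n) = (if p < Suc m then A p else idm n)"
    proof (cases "p = m")
      case True then show ?thesis using assms(3) p by (simp add: mmult_idm_right)
    next
      case False then show ?thesis using assms(3) p by (simp add: mmult_idm_left)
    qed
  qed (use assms in simp)
  finally show ?case .
qed

lemma bd_eq_prod:
  assumes "n * a \<le> l" "0 < n" "\<And>q. q < a \<Longrightarrow> mwf n (A q)"
  shows "bd n l a A = mprod l (\<lambda>p. Ep n l a p (A p)) a"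
proof -
  have "bd n l a A = bd n l a (\<lambda>q. if q < a then A q else idm n)"
    by (rule bd_cong) (use assms in auto)
  then show ?thesis using bd_as_prod[OF assms order_refl] by simp
qed

lemma mprod_const: "mprod k (\<lambda>p. A) m = mpow k A m"
  by (induction m) auto

lemma corner_mult: assumes "0 < n" "n \<le> l"
  shows "mmult l (corner n l A) (corner n l B) = corner n l (mmult n A B)"
proof -
  have l: "n * 1 \<le> l" using assms by simp
  have "mmult l (corner n l A) (corner n l B) = bd n l 1 (\<lambda>q. mmult n (if q = 0 then A else idm n) (if q = 0 then B else idm n))"
    using corner_bd[OF assms(1) order_refl l] bd_mult[OF l assms(1)] by simp
  also have "\<dots> = bd n l 1 (\<lambda>q. if q = 0 then mmult n A B else idm n)"
    by (rule bd_cong) (use assms in auto)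
  also have "\<dots> = corner n l (mmult n A B)"
    using corner_bd[OF assms(1) order_refl l] by simp
  finally show ?thesis .
qed

lemma corner_idm: assumes "0 < n" "n \<le> l" shows "corner n l (idm n) = idm l"
proof -
  have l: "n * 1 \<le> l" using assms by simp
  have "corner n l (idm n) = bd n l 1 (\<lambda>q. if q = 0 then idm n else idm n)"
    using corner_bd[OF assms(1) order_refl l] by simp
  then show ?thesis using bd_idm[OF assms(1) l] by simp
qed

lemma corner_madj: "madj (corner n l A) = corner n l (madj A)"
  by (auto simp: corner_def madj_def fun_eq_iff)

lemma corner_wf: "n \<le> l \<Longrightarrow> mwf l (corner n l A)"
  by (auto simp: corner_def mwf_def)

lemma unitary_corner: assumes "unitary_mat n A" "0 < n" "n \<le> l" shows "unitary_mat l (corner n l A)"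
  using assms corner_wf[OF assms(3)] corner_mult[OF assms(2,3)] corner_idm[OF assms(2,3)]
  by (simp add: unitary_iff corner_madj)

lemma corner_mpow: assumes "0 < n" "n \<le> l" shows "corner n l (mpow n A N) = mpow l (corner n l A) N"
  by (induction N) (simp_all add: corner_mult[OF assms, symmetric] corner_idm[OF assms])

lemma corner_mzpow: assumes "0 < n" "n \<le> l" shows "corner n l (mzpow n A b) = mzpow l (corner n l A) b"
  by (simp add: mzpow_def corner_mpow[OF assms] corner_madj)

lemma mprod_corner:
  assumes "0 < n" "n \<le> l"
  shows "mprod l (\<lambda>p. corner n l (F p)) m = corner n l (mprod n F m)"
  by (induction m) (simp_all add: corner_mult[OF assms, symmetric] corner_idm[OF assms])

definition sg :: "nat \<Rightarrow> nat \<Rightarrow> nat \<Rightarrow> nat" where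
  "sg n p i = (if i div n = 0 then p * n + i mod n else if i div n = p then i mod n else i)"
definition mv :: "nat \<Rightarrow> nat \<Rightarrow> nat \<Rightarrow> bool" where
  "mv n p i \<longleftrightarrow> (i div n = 0 \<or> i div n = p)"
definition ra :: "nat \<Rightarrow> nat \<Rightarrow> real \<Rightarrow> nat \<Rightarrow> real" where
  "ra n p t i = (if mv n p i then cos (t * pi / 2) else 1)"
definition rb :: "nat \<Rightarrow> nat \<Rightarrow> real \<Rightarrow> nat \<Rightarrow> real" where
  "rb n p t i = (if mv n p i then (if i div n = 0 then - sin (t * pi / 2) else sin (t * pi / 2)) else 0)"
definition Rm :: "nat \<Rightarrow> nat \<Rightarrow> nat \<Rightarrow> real \<Rightarrow> cmat" where
  "Rm n l p t = (\<lambda>i j. (if i < l \<and> j = i then complex_of_real (ra n p t i) else 0)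
                     + (if i < l \<and> j = sg n p i then complex_of_real (rb n p t i) else 0))"

context
  fixes n l p :: nat
  assumes n: "0 < n" and p: "1 \<le> p" and pl: "(p + 1) * n \<le> l"
begin

lemma sg_div0: "i div n = 0 \<Longrightarrow> sg n p i div n = p \<and> sg n p i mod n = i mod n"
  using n by (simp add: sg_def)

lemma sg_divp: "i div n = p \<Longrightarrow> sg n p i div n = 0 \<and> sg n p i mod n = i mod n"
  using n p by (simp add: sg_def)

lemma sg_other: "\<not> mv n p i \<Longrightarrow> sg n p i = i"
  by (simp add: sg_def mv_def)

lemma sg_sg[simp]: "sg n p (sg n p i) = i"
proof -
  consider "i div n = 0" | "i div n = p" | "\<not> mv n p i" unfolding mv_def by auto
  then show ?thesis
  proof cases
    case 1 then show ?thesis using sg_div0[OF 1] p div_mod_inj[of "sg n p (sg n p i)" n i]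
      by (metis sg_divp)
  next
    case 2 then show ?thesis using sg_divp[OF 2] p div_mod_inj[of "sg n p (sg n p i)" n i]
      by (metis sg_div0)
  next
    case 3 then show ?thesis by (simp add: sg_other)
  qed
qed

lemma sg_inj: "sg n p i = sg n p j \<longleftrightarrow> i = j"
  by (metis sg_sg)

lemma mv_sg: "mv n p (sg n p i) = mv n p i"
proof -
  consider "i div n = 0" | "i div n = p" | "\<not> mv n p i" unfolding mv_def by auto
  then show ?thesis
  proof cases
    case 1 then show ?thesis using sg_div0[OF 1] by (simp add: mv_def)
  next
    case 2 then show ?thesis using sg_divp[OF 2] by (simp add: mv_def)
  next
    case 3 then show ?thesis by (simp add: sg_other)
  qed
qed

lemma sg_ne: "mv n p i \<Longrightarrow> sg n p i \<noteq> i"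
proof -
  assume "mv n p i"
  then consider "i div n = 0" | "i div n = p" unfolding mv_def by auto
  then show ?thesis
  proof cases
    case 1 then show ?thesis using sg_div0[OF 1] p by auto
  next
    case 2 then show ?thesis using sg_divp[OF 2] p by auto
  qed
qed

lemma sg_lt: "i < l \<Longrightarrow> sg n p i < l"
proof -
  assume i: "i < l"
  show ?thesis
  proof (cases "i div n = 0")
    case True
    then have "sg n p i = p * n + i mod n" by (simp add: sg_def)
    also have "\<dots> < p * n + n" using n by simp
    also have "\<dots> \<le> l" using pl by (simp add: algebra_simps)
    finally show ?thesis .
  next
    case False
    show ?thesis
    proof (cases "i div n = p")
      case True
      then have "sg n p i = i mod n" using False by (simp add: sg_def)
      also have "\<dots> < n" using n by simp
      also have "\<dots> \<le> l" using pl by simp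
      finally show ?thesis .
    next
      case F2: False
      then show ?thesis using False i by (simp add: sg_def)
    qed
  qed
qed

lemma ra_sg: "ra n p t (sg n p i) = ra n p t i"
  by (simp add: ra_def mv_sg)

lemma rb_sg: "rb n p t (sg n p i) = - rb n p t i"
proof -
  consider "i div n = 0" | "i div n = p" | "\<not> mv n p i" unfolding mv_def by auto
  then show ?thesis
  proof cases
    case 1 then show ?thesis using sg_div0[OF 1] p by (simp add: rb_def mv_def)
  next
    case 2 then show ?thesis using sg_divp[OF 2] p by (simp add: rb_def mv_def)
  next
    case 3 then show ?thesis by (simp add: sg_other rb_def)
  qed
qed

lemma prod_ifs: "(if P then x else 0) * (if Q then y else (0::complex)) = (if P \<and> Q then x * y else 0)"
  by simp

lemma sum_two:
  fixes f1 g1 f2 g2 :: complex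
  assumes "i < l" "j < l" "s1 < l" "s2 < l"
  shows "(\<Sum>r<l. ((if r = i then f1 else 0) + (if r = s1 then g1 else 0)) * ((if r = j then f2 else 0) + (if r = s2 then g2 else 0)))
    = (if i = j then f1 * f2 else 0) + (if i = s2 then f1 * g2 else 0) + (if s1 = j then g1 * f2 else 0) + (if s1 = s2 then g1 * g2 else 0)"
proof -
  have e: "\<And>a b c. a < l \<Longrightarrow> (\<Sum>r<l. if r = a \<and> r = b then c else (0::complex)) = (if a = b then c else 0)"
    by (cases "a = b") (auto intro!: sum.neutral)
  show ?thesis
    by (simp add: distrib_left distrib_right sum.distrib prod_ifs e assms)
qed

lemma Rm_wf: "mwf l (Rm n l p t)"
  by (auto simp: mwf_def Rm_def sg_lt)

lemma Rm_madj: "madj (Rm n l p t) = Rm n l p (- t)"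
proof (intro ext)
  fix i j
  have rbm: "rb n p (- t) i = - rb n p t i" by (simp add: rb_def)
  have ram: "ra n p (- t) i = ra n p t i" by (simp add: ra_def)
  have L: "madj (Rm n l p t) i j = cnj ((if j < l \<and> i = j then complex_of_real (ra n p t j) else 0)
                     + (if j < l \<and> i = sg n p j then complex_of_real (rb n p t j) else 0))"
    by (simp add: madj_def Rm_def)
  have R: "Rm n l p (- t) i j = (if i < l \<and> j = i then complex_of_real (ra n p t i) else 0)
                     + (if i < l \<and> j = sg n p i then complex_of_real (- rb n p t i) else 0)"
    by (simp add: Rm_def rbm ram)
  show "madj (Rm n l p t) i j = Rm n l p (- t) i j"
  proof (cases "j = i")
    case True
    show ?thesis
    proof (cases "mv n p i")
      case True
      then have "i \<noteq> sg n p i" using sg_ne by metis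
      then show ?thesis unfolding L R using \<open>j = i\<close> by simp
    next
      case False
      then have "rb n p t i = 0" by (simp add: rb_def)
      then show ?thesis unfolding L R using \<open>j = i\<close> by simp
    qed
  next
    case False
    show ?thesis
    proof (cases "j = sg n p i")
      case True
      have il: "sg n p i < l \<longleftrightarrow> i < l" using sg_lt sg_sg by metis
      have "rb n p t (sg n p i) = - rb n p t i" using rb_sg by simp
      moreover note L' = L[unfolded True] and R' = R[unfolded True]
      ultimately show ?thesis unfolding True L' R' using False il True by simp
    next
      case F2: False
      then have "i \<noteq> sg n p j" by (metis sg_sg)
      then show ?thesis unfolding L R using False F2 by simp
    qed
  qed
qed

lemma cnj_if_real: "cnj (if P then complex_of_real x else 0) = (if P then complex_of_real x else 0)"
  by simp

lemma Rm_rr: "mmult l (Rm n l p t) (madj (Rm n l p t)) = idm l"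
proof (intro ext)
  fix i j
  show "mmult l (Rm n l p t) (madj (Rm n l p t)) i j = idm l i j"
  proof (cases "i < l \<and> j < l")
    case False then show ?thesis by (auto simp: mmult_def idm_def)
  next
    case True
    have "mmult l (Rm n l p t) (madj (Rm n l p t)) i j
      = (\<Sum>r<l. ((if r = i then complex_of_real (ra n p t i) else 0) + (if r = sg n p i then complex_of_real (rb n p t i) else 0))
             * ((if r = j then complex_of_real (ra n p t j) else 0) + (if r = sg n p j then complex_of_real (rb n p t j) else 0)))"
      using True by (simp add: mmult_def madj_def Rm_def cnj_if_real)
    also have "\<dots> = (if i = j then complex_of_real (ra n p t i) * complex_of_real (ra n p t j) else 0)
       + (if i = sg n p j then complex_of_real (ra n p t i) * complex_of_real (rb n p t j) else 0)
       + (if sg n p i = j then complex_of_real (rb n p t i) * complex_of_real (ra n p t j) else 0)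
       + (if sg n p i = sg n p j then complex_of_real (rb n p t i) * complex_of_real (rb n p t j) else 0)"
      using True sg_lt by (intro sum_two) auto
    also have "\<dots> = idm l i j"
    proof (cases "i = j")
      case True
      have "(ra n p t i)^2 + (rb n p t i)^2 = 1"
        by (auto simp: ra_def rb_def)
      then have sq: "complex_of_real (ra n p t i) * complex_of_real (ra n p t i) + complex_of_real (rb n p t i) * complex_of_real (rb n p t i) = 1"
        by (metis of_real_1 of_real_add of_real_mult power2_eq_square)
      show ?thesis
      proof (cases "mv n p i")
        case mv: True
        have ne: "sg n p i \<noteq> i" using sg_ne[OF mv] .
        show ?thesis using ne ne[symmetric] sq \<open>i = j\<close> \<open>i < l \<and> j < l\<close> by (simp add: idm_def)
      next
        case mv: False
        then have "sg n p i = i" "rb n p t i = 0" "ra n p t i = 1" by (simp_all add: sg_other rb_def ra_def)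
        then show ?thesis using \<open>i = j\<close> \<open>i < l \<and> j < l\<close> by (simp add: idm_def)
      qed
    next
      case False
      show ?thesis
      proof (cases "j = sg n p i")
        case True
        have ne: "sg n p i \<noteq> i" using False True by simp
        show ?thesis unfolding True using ne
          by (simp add: rb_sg ra_sg idm_def sg_inj)
      next
        case F2: False
        then have "i \<noteq> sg n p j" by (metis sg_sg)
        then show ?thesis using False F2 by (simp add: idm_def sg_inj)
      qed
    qed
    finally show ?thesis .
  qed
qed

lemma unitary_Rm: "unitary_mat l (Rm n l p t)"
proof -
  have "mmult l (madj (Rm n l p t)) (Rm n l p t) = mmult l (Rm n l p (-t)) (madj (Rm n l p (-t)))"
    by (simp add: Rm_madj)
  then show ?thesis using Rm_rr[of t] Rm_rr[of "-t"] Rm_wf by (simp add: unitary_iff)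
qed

lemma Rm_0: "Rm n l p 0 = idm l"
  by (auto simp: Rm_def ra_def rb_def idm_def fun_eq_iff)

end

lemma cont_if_const[continuous_intros]:
  "continuous_on S f \<Longrightarrow> continuous_on S g \<Longrightarrow> continuous_on S (\<lambda>x. if c then f x else g x)"
  by (cases c) auto

lemma cnj_if0: "cnj (if P then x else 0) = (if P then cnj x else 0)" by simp

lemma mono_conj:
  assumes rho: "\<And>i. i < l \<Longrightarrow> \<rho> i < l"
    and M: "M = (\<lambda>i j. if i < l \<and> j = \<rho> i then e i else 0)"
    and ij: "i < l" "j < l"
  shows "mmult l (mmult l M X) (madj M) i j = e i * X (\<rho> i) (\<rho> j) * cnj (e j)"
proof -
  have MX: "mmult l M X i r = e i * X (\<rho> i) r" if "r < l" for r
    using that ij rho by (simp add: mmult_def M if_distrib[of "\<lambda>x. x * _"] sum.delta cong: if_cong)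
  have "mmult l (mmult l M X) (madj M) i j = (\<Sum>r<l. e i * X (\<rho> i) r * (if r = \<rho> j then cnj (e j) else 0))"
    using ij MX by (simp add: mmult_def madj_def M cnj_if0 eq_commute[of _ "\<rho> j"])
  also have "\<dots> = e i * X (\<rho> i) (\<rho> j) * cnj (e j)"
    using rho[OF ij(2)] by (simp add: if_distrib[of "\<lambda>x. _ * x"] sum.delta cong: if_cong)
  finally show ?thesis .
qed

definition eps :: "nat \<Rightarrow> nat \<Rightarrow> nat \<Rightarrow> complex" where
  "eps n p i = (if mv n p i \<and> i div n = 0 then -1 else 1)"

context
  fixes n l p :: nat
  assumes n: "0 < n" and p: "1 \<le> p" and pl: "(p + 1) * n \<le> l"
begin

lemma Rm_1: "Rm n l p 1 = (\<lambda>i j. if i < l \<and> j = sg n p i then eps n p i else 0)"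
proof (intro ext)
  fix i j
  have cs: "cos (1 * pi / 2) = 0" "sin (1 * pi / 2) = 1" by simp_all
  show "Rm n l p 1 i j = (if i < l \<and> j = sg n p i then eps n p i else 0)"
  proof (cases "mv n p i")
    case True
    then have "sg n p i \<noteq> i" using sg_ne[OF n p pl] by blast
    then show ?thesis using True unfolding Rm_def ra_def rb_def eps_def cs by (cases "j = i") simp_all
  next
    case False
    then show ?thesis using sg_other[OF n p pl False] unfolding Rm_def ra_def rb_def eps_def by simp
  qed
qed

lemma sg_lt_n: "sg n p i < n \<longleftrightarrow> i div n = p"
proof (cases "i div n = 0")
  case True
  have "n \<le> p * n" using p by simp
  then have "\<not> p * n + i mod n < n" by linarith
  then have "\<not> sg n p i < n" using True by (simp add: sg_def)
  then show ?thesis using True p by simp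
next
  case False
  show ?thesis
  proof (cases "i div n = p")
    case True then show ?thesis using False n by (simp add: sg_def)
  next
    case F2: False
    then have "sg n p i = i" using False by (simp add: sg_def)
    moreover have "n \<le> i" using False n by (simp add: div_eq_0_iff)
    ultimately show ?thesis using F2 by simp
  qed
qed

lemma eps_sq: "eps n p i * cnj (eps n p i) = 1"
  by (simp add: eps_def)

lemma Ep_conj:
  assumes pa: "p < a" and nal: "n * a \<le> l"
  shows "mmult l (mmult l (Rm n l p 1) (corner n l A)) (madj (Rm n l p 1)) = Ep n l a p A"
proof (intro ext)
  fix i j
  show "mmult l (mmult l (Rm n l p 1) (corner n l A)) (madj (Rm n l p 1)) i j = Ep n l a p A i j"
  proof (cases "i < l \<and> j < l")
    case False
    then show ?thesis using nal by (auto simp: mmult_def Ep_def bd_def)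
  next
    case True
    have c: "mmult l (mmult l (Rm n l p 1) (corner n l A)) (madj (Rm n l p 1)) i j
       = eps n p i * corner n l A (sg n p i) (sg n p j) * cnj (eps n p j)"
      using True by (intro mono_conj[OF sg_lt[OF n p pl] Rm_1]) auto
    show ?thesis
    proof (cases "i div n = p \<and> j div n = p")
      case T2: True
      have "i < n * a" "j < n * a" using T2 pa n
        by (metis div_less_iff_less_mult mult.commute)+
      moreover have "eps n p i = 1" "eps n p j = 1" using T2 p by (auto simp: eps_def)
      moreover have "sg n p i = i mod n" "sg n p j = j mod n" using T2 p by (auto simp: sg_def)
      ultimately show ?thesis using c T2 n by (simp add: corner_def Ep_def bd_def)
    next
      case F2: False
      have "\<not> (sg n p i < n \<and> sg n p j < n)" using F2 sg_lt_n by blast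
      then have "corner n l A (sg n p i) (sg n p j) = (if i = j then 1 else 0)"
        using True sg_lt[OF n p pl] by (auto simp: corner_def sg_inj[OF n p pl])
      then have c2: "mmult l (mmult l (Rm n l p 1) (corner n l A)) (madj (Rm n l p 1)) i j = (if i = j then 1 else 0)"
        using c eps_sq by auto
      show ?thesis
      proof (cases "i < n * a \<and> j < n * a \<and> i div n = j div n")
        case T3: True
        then have "i div n \<noteq> p" using F2 by auto
        then show ?thesis using c2 T3 n div_mod_inj[of i n j] by (auto simp: Ep_def bd_def idm_def)
      next
        case F3: False
        then show ?thesis using c2 True by (auto simp: Ep_def bd_def)
      qed
    qed
  qed
qed

end

lemma Ep_0: assumes "0 < n" "1 \<le> a" "n * a \<le> l" shows "Ep n l a 0 A = corner n l A"
  using corner_bd[OF assms] by (simp add: Ep_def)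

lemma mcont_Rm: fixes S :: "'a::t2_space set" assumes "continuous_on S f" shows "mcont S (\<lambda>q. Rm n l p (f q))"
proof -
  have g: "continuous_on S (\<lambda>x. f x * pi / 2)" using assms by (auto intro!: continuous_intros)
  have cs: "continuous_on S (\<lambda>x. cos (f x * pi / 2))" "continuous_on S (\<lambda>x. sin (f x * pi / 2))"
    using continuous_on_cos[OF g] continuous_on_sin[OF g] by auto
  show ?thesis
    unfolding mcont_def Rm_def ra_def rb_def
    by (intro allI continuous_on_add cont_if_const continuous_on_const continuous_on_of_real cs continuous_on_minus)
qed

lemma Ep_htp:
  fixes X :: "'x::t2_space set"
  assumes n: "0 < n" and pa: "p < a" and nal: "n * a \<le> l" and A: "valid n X B A"
  shows "ghtp l X B (\<lambda>x. Ep n l a p (A x)) (\<lambda>x. corner n l (A x))"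
proof (cases "p = 0")
  case True
  have a: "1 \<le> a" using pa by simp
  have "n \<le> n * a" using a by simp
  then have nl: "n \<le> l" using nal by linarith
  have "valid l X B (\<lambda>x. corner n l (A x))"
    using A unfolding valid_def
    using mcont_corner unitary_corner[OF _ n nl] corner_idm[OF n nl] by auto
  then show ?thesis using ghtp_refl Ep_0[OF n a nal] True by simp
next
  case False
  then have p: "1 \<le> p" by simp
  have "(p + 1) * n \<le> a * n" using pa by (intro mult_le_mono1) simp
  then have pl: "(p + 1) * n \<le> l" using nal by (simp add: mult.commute)
  have "n \<le> (p + 1) * n" by simp
  then have nl: "n \<le> l" using pl by linarith
  let ?H = "\<lambda>q. mmult l (mmult l (Rm n l p (1 - fst q)) (corner n l (A (snd q)))) (madj (Rm n l p (1 - fst q)))"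
  show ?thesis
  proof (rule ghtpI[where H="?H"])
    have "mcont X A" using A by (simp add: valid_def)
    then have "mcont ({0..1::real} \<times> X) (\<lambda>q. A (snd q))"
      by (rule mcont_compose) (auto intro!: continuous_intros)
    then have cA: "mcont ({0..1::real} \<times> X) (\<lambda>q. corner n l (A (snd q)))"
      by (rule mcont_corner)
    have cR: "mcont ({0..1::real} \<times> X) (\<lambda>q. Rm n l p (1 - fst q))"
      by (rule mcont_Rm) (auto intro!: continuous_intros)
    show "mcont ({0..1} \<times> X) ?H"
      by (intro mcont_mmult mcont_madj cA cR)
  next
    fix t x assume "t \<in> {0..1::real}" "x \<in> X"
    then have "unitary_mat n (A x)" using A by (simp add: valid_def)
    then have "unitary_mat l (corner n l (A x))" using unitary_corner n nl by blast
    then show "unitary_mat l (?H (t, x))"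
      using unitary_Rm[OF n p pl] by (intro unitary_mmult unitary_madj) auto
  next
    fix x assume "x \<in> X"
    then show "?H (0, x) = Ep n l a p (A x)" using Ep_conj[OF n p pl pa nal] by simp
  next
    fix x assume "x \<in> X"
    then have "mwf l (corner n l (A x))" using corner_wf[OF nl] by blast
    then show "?H (1, x) = corner n l (A x)" using Rm_0[OF n p pl] by (simp add: mmult_idm_left mmult_idm_right)
  next
    fix t x assume "t \<in> {0..1::real}" "x \<in> B"
    then have "A x = idm n" using A by (simp add: valid_def)
    then show "?H (t, x) = idm l" using corner_idm[OF n nl] Rm_rr[OF n p pl] Rm_wf[OF n p pl]
      by (simp add: mmult_idm_right)
  qed
qed

lemma mprod_htp:
  assumes "\<And>p. p < m \<Longrightarrow> ghtp k X B (F p) (G p)"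
  shows "ghtp k X B (\<lambda>x. mprod k (\<lambda>p. F p x) m) (\<lambda>x. mprod k (\<lambda>p. G p x) m)"
  using assms
proof (induction m)
  case 0
  then show ?case using ghtp_refl[OF valid_idm] by simp
next
  case (Suc m)
  then show ?case by (simp add: ghtp_mult)
qed

lemma bd_htp:
  fixes X :: "'x::t2_space set"
  assumes n: "0 < n" and nal: "n * a \<le> l" and A: "\<And>p. p < a \<Longrightarrow> valid n X B (A p)"
  shows "ghtp l X B (\<lambda>x. bd n l a (\<lambda>p. A p x)) (\<lambda>x. mprod l (\<lambda>p. corner n l (A p x)) a)"
proof -
  have h1: "ghtp l X B (\<lambda>x. mprod l (\<lambda>p. Ep n l a p (A p x)) a) (\<lambda>x. mprod l (\<lambda>p. corner n l (A p x)) a)"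
    by (rule mprod_htp) (rule Ep_htp[OF n _ nal A]; simp)
  have eq: "\<And>x. x \<in> X \<Longrightarrow> bd n l a (\<lambda>p. A p x) = mprod l (\<lambda>p. Ep n l a p (A p x)) a"
  proof -
    fix x assume x: "x \<in> X"
    have "\<And>q. q < a \<Longrightarrow> mwf n (A q x)" using A x unitary_wf by (auto simp: valid_def)
    then show "bd n l a (\<lambda>p. A p x) = mprod l (\<lambda>p. Ep n l a p (A p x)) a"
      by (rule bd_eq_prod[OF nal n])
  qed
  show ?thesis by (rule ghtp_cong[OF h1]) (simp_all add: eq)
qed

lemma part_x:
  fixes e :: "'v::euclidean_space"
  assumes n: "1 \<le> n" and a: "1 \<le> a" and nal: "n * a \<le> l"
    and lam: "\<forall>p<a. continuous_on circle (lam p) \<and> lam p ` circle \<subseteq> circle \<and> lam p 1 = 1"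
    and U: "ct_map n e U"
  shows "pi_rat_eq l e (xcoord (phi_u n l a lam U)) (\<lambda>s. mpow l (corner n l (xcoord U s)) a)"
proof -
  have n0: "0 < n" using n by simp
  have "n \<le> n * a" using a by simp
  then have nl: "n \<le> l" using nal by linarith
  let ?X = "sphere (0::'v) 1"
  let ?A = "\<lambda>s. U (s, 1)"
  have one: "(1::complex) \<in> circle" by simp
  have vA: "valid n ?X {e} ?A"
    unfolding valid_def
  proof (intro conjI)
    show "mcont ?X ?A"
      using U unfolding ct_map_def
      by (intro mcont_compose[where T="sphere 0 1 \<times> circle" and F=U and g="\<lambda>s. (s, 1)"]) (auto intro!: continuous_intros)
    show "\<forall>x\<in>?X. unitary_mat n (?A x)" using U one by (auto simp: ct_map_def)
    show "\<forall>x\<in>{e}. ?A x = idm n" using U one by (auto simp: ct_map_def)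
  qed
  have h: "ghtp l ?X {e} (\<lambda>x. bd n l a (\<lambda>p. ?A x)) (\<lambda>x. mprod l (\<lambda>p. corner n l (?A x)) a)"
    using bd_htp[OF n0 nal, of ?X "{e}" "\<lambda>p. ?A"] vA by simp
  have "ghtp l ?X {e} (\<lambda>s. mpow l (xcoord (phi_u n l a lam U) s) 1) (\<lambda>s. mpow l (mpow l (corner n l (xcoord U s)) a) 1)"
  proof (rule ghtp_cong[OF h])
    fix x assume x: "x \<in> ?X"
    have "xcoord (phi_u n l a lam U) x = bd n l a (\<lambda>p. U (x, lam p 1))"
      by (simp add: xcoord_def phi_u_bd)
    also have "\<dots> = bd n l a (\<lambda>p. ?A x)"
      using lam n0 by (intro bd_cong) auto
    finally have "xcoord (phi_u n l a lam U) x = bd n l a (\<lambda>p. ?A x)" .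
    then show "bd n l a (\<lambda>p. ?A x) = mpow l (xcoord (phi_u n l a lam U) x) 1"
      using mmult_idm_right[OF bd_wf[OF nal]] by simp
    show "mprod l (\<lambda>p. corner n l (?A x)) a = mpow l (mpow l (corner n l (xcoord U x)) a) 1"
      by (simp add: mprod_const xcoord_def mmult_idm_right)
  qed
  then show ?thesis unfolding pi_rat_eq_def pi_htp_ghtp by (intro exI[of _ 1]) simp
qed

definition E :: "real \<Rightarrow> complex" where
  "E \<phi> = exp (2 * of_real pi * \<i> * of_real \<phi>)"

definition th :: "complex \<Rightarrow> real" where
  "th z = Arg2pi z / (2 * pi)"

lemma E_circle: "E \<phi> \<in> circle"
  by (simp add: E_def)

lemma norm_E[simp]: "norm (E \<phi>) = 1"
  by (simp add: E_def)

lemma E_add: "E (x + y) = E x * E y"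
  by (simp add: E_def distrib_left exp_add)

lemma E_0[simp]: "E 0 = 1"
  by (simp add: E_def)

lemma E_cis: "E \<phi> = cis (2 * pi * \<phi>)"
  by (simp add: E_def cis_conv_exp algebra_simps)

lemma E_int: "E (of_int k) = 1"
  unfolding E_cis by (rule cis_multiple_2pi) simp

lemma E_int': "x \<in> \<int> \<Longrightarrow> E x = 1"
  by (metis E_int Ints_cases)

lemma E_shift: "y \<in> \<int> \<Longrightarrow> E (x + y) = E x"
  by (simp add: E_add E_int')

lemma E_th: assumes "z \<in> circle" shows "E (th z) = z"
proof -
  have "z = complex_of_real (norm z) * exp (\<i> * complex_of_real (Arg2pi z))"
    using Arg2pi[of z] by (simp add: is_Arg_def)
  then have z: "z = exp (\<i> * complex_of_real (Arg2pi z))" using assms by simp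
  have "E (th z) = exp (\<i> * complex_of_real (Arg2pi z))"
    unfolding E_def th_def by (simp add: field_simps)
  then show ?thesis using z by simp
qed

lemma th_range: "0 \<le> th z" "th z < 1"
  using Arg2pi[of z] by (auto simp: th_def field_simps)

lemma th_E: assumes "0 \<le> \<phi>" "\<phi> < 1" shows "th (E \<phi>) = \<phi>"
proof -
  have "Arg2pi (E \<phi>) = 2 * pi * \<phi>"
    by (rule Arg2pi_unique[of 1]) (use assms in \<open>auto simp: E_def algebra_simps\<close>)
  then show ?thesis by (simp add: th_def)
qed

lemma th_1[simp]: "th 1 = 0"
  by (simp add: th_def Arg2pi_of_real[of 1, simplified])

lemma continuous_on_E[continuous_intros]: "continuous_on S f \<Longrightarrow> continuous_on S (\<lambda>x. E (f x))"
  unfolding E_def by (intro continuous_intros)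

lemma E_image: "(\<lambda>\<phi>. E \<phi>) ` {0..1} = circle"
proof
  show "(\<lambda>\<phi>. E \<phi>) ` {0..1} \<subseteq> circle" using E_circle by auto
  show "circle \<subseteq> (\<lambda>\<phi>. E \<phi>) ` {0..1}"
  proof
    fix z :: complex assume "z \<in> circle"
    then have "z = E (th z)" by (simp add: E_th)
    moreover have "th z \<in> {0..1}" using th_range[of z] by auto
    ultimately show "z \<in> (\<lambda>\<phi>. E \<phi>) ` {0..1}" by blast
  qed
qed

lemma lift_cont:
  fixes G :: "real \<times> 'v::euclidean_space \<times> complex \<Rightarrow> complex"
  assumes K: "compact K"
    and c: "continuous_on ({0..1} \<times> K \<times> {0..1}) (\<lambda>(t, s, \<phi>). G (t, s, E \<phi>))"
  shows "continuous_on ({0..1} \<times> K \<times> circle) G"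
proof -
  define f :: "real \<times> 'v \<times> real \<Rightarrow> real \<times> 'v \<times> complex" where "f = (\<lambda>(t, s, \<phi>). (t, s, E \<phi>))"
  let ?S = "{0..1::real} \<times> K \<times> {0..1::real}"
  let ?T = "{0..1::real} \<times> K \<times> circle"
  have cf: "continuous_on ?S f" unfolding f_def
    by (auto simp: case_prod_unfold intro!: continuous_intros)
  have fS: "f ` ?S = ?T"
  proof
    show "f ` ?S \<subseteq> ?T" using E_circle by (auto simp: f_def)
    show "?T \<subseteq> f ` ?S"
    proof
      fix x assume "x \<in> ?T"
      then obtain t s z where x: "x = (t, s, z)" "t \<in> {0..1}" "s \<in> K" "z \<in> circle" by auto
      then have "x = f (t, s, th z)" by (simp add: f_def E_th)
      moreover have "(t, s, th z) \<in> ?S" using x th_range[of z] by auto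
      ultimately show "x \<in> f ` ?S" by blast
    qed
  qed
  have cS: "compact ?S" using K by (intro compact_Times compact_Icc)
  have gf: "(\<lambda>(t, s, \<phi>). G (t, s, E \<phi>)) = G \<circ> f" by (auto simp: f_def fun_eq_iff)
  show ?thesis
    unfolding continuous_openin_preimage_eq
  proof (intro allI impI)
    fix V :: "complex set" assume V: "open V"
    have "openin (top_of_set ?S) (?S \<inter> (G \<circ> f) -` V)"
      using c V unfolding gf continuous_openin_preimage_eq by blast
    moreover have "?S \<inter> (G \<circ> f) -` V = ?S \<inter> f -` (?T \<inter> G -` V)"
      using fS by auto
    ultimately have "openin (top_of_set ?S) (?S \<inter> f -` (?T \<inter> G -` V))" by simp
    then show "openin (top_of_set ?T) (?T \<inter> G -` V)"
      using Abstract_Topology_2.continuous_imp_quotient_map[OF cf fS cS, of "?T \<inter> G -` V"] by blast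
  qed
qed

definition Mh :: "('v \<times> complex \<Rightarrow> cmat) \<Rightarrow> (real \<Rightarrow> real) \<Rightarrow> 'v \<times> complex \<Rightarrow> cmat" where
  "Mh y h = (\<lambda>x. y (fst x, E (h (th (snd x)))))"

definition okh :: "(real \<Rightarrow> real) \<Rightarrow> bool" where
  "okh h \<longleftrightarrow> continuous_on {0..1} h \<and> h 0 = 0 \<and> h 1 \<in> \<int>"

lemma E_1[simp]: "E 1 = 1"
  using E_int[of 1] by simp

context
  fixes n :: nat and e :: "'v::euclidean_space" and y :: "'v \<times> complex \<Rightarrow> cmat"
  assumes n: "0 < n" and e: "e \<in> sphere 0 1"
    and vy: "valid n (sphere 0 1 \<times> circle) (sphere 0 1 \<times> {1} \<union> {e} \<times> circle) y"
begin

abbreviation "XX \<equiv> sphere (0::'v) 1 \<times> circle"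
abbreviation "BB \<equiv> sphere (0::'v) 1 \<times> {1} \<union> {e} \<times> circle"

lemma y_cont: "mcont XX y" using vy by (simp add: valid_def)
lemma y_unit: "s \<in> sphere 0 1 \<Longrightarrow> z \<in> circle \<Longrightarrow> unitary_mat n (y (s, z))" using vy by (simp add: valid_def)
lemma y_1: "s \<in> sphere 0 1 \<Longrightarrow> y (s, 1) = idm n" using vy by (simp add: valid_def)
lemma y_e: "z \<in> circle \<Longrightarrow> y (e, z) = idm n" using vy by (simp add: valid_def)

lemma htp_from_F:
  fixes Hm :: "real \<times> 'v \<times> complex \<Rightarrow> cmat" and k :: "real \<times> 'v \<times> real \<Rightarrow> real"
  assumes k: "continuous_on ({0..1} \<times> sphere 0 1 \<times> {0..1}) k"
    and eq: "\<And>t s \<phi>. t \<in> {0..1} \<Longrightarrow> s \<in> sphere 0 1 \<Longrightarrow> \<phi> \<in> {0..1} \<Longrightarrow> Hm (t, s, E \<phi>) = y (s, E (k (t, s, \<phi>)))"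
  shows "mcont ({0..1} \<times> XX) Hm"
  unfolding mcont_def
proof (intro allI)
  fix i j
  have cy: "continuous_on XX (\<lambda>x. y x i j)" using y_cont by (simp add: mcont_def)
  have "continuous_on ({0..1} \<times> sphere 0 1 \<times> {0..1}) (\<lambda>q. y (fst (snd q), E (k q)) i j)"
    using cy by (rule continuous_on_compose2[where g="\<lambda>x. y x i j" and f="\<lambda>q. (fst (snd q), E (k q))"])
       (auto intro!: continuous_intros k simp: E_circle)
  then have "continuous_on ({0..1} \<times> sphere 0 1 \<times> {0..1}) (\<lambda>(t, s, \<phi>). Hm (t, s, E \<phi>) i j)"
    by (rule continuous_on_cong[THEN iffD1, rotated 2]) (auto simp: eq)
  then show "continuous_on ({0..1} \<times> XX) (\<lambda>x. Hm x i j)"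
    by (rule lift_cont[OF compact_sphere])
qed

lemma cont_comp01:
  assumes "continuous_on {0..1} h"
  shows "continuous_on ({0..1} \<times> sphere (0::'v) 1 \<times> {0..1}) (\<lambda>q::real \<times> 'v \<times> real. h (snd (snd q)))"
  using assms by (rule continuous_on_compose2) (auto intro!: continuous_intros)

lemma lin_htp:
  assumes h: "okh h" and g: "okh g" and hg: "h 1 = g 1"
  shows "ghtp n XX BB (Mh y h) (Mh y g)"
proof -
  let ?H = "\<lambda>q::real \<times> 'v \<times> complex. y (fst (snd q), E ((1 - fst q) * h (th (snd (snd q))) + fst q * g (th (snd (snd q)))))"
  show ?thesis
  proof (rule ghtpI[where H="?H"])
    let ?k = "\<lambda>q::real \<times> 'v \<times> real. (1 - fst q) * h (snd (snd q)) + fst q * g (snd (snd q))"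
    have ck: "continuous_on ({0..1} \<times> sphere 0 1 \<times> {0..1}) ?k"
      using cont_comp01[of h] cont_comp01[of g] h g unfolding okh_def
      by (intro continuous_intros) auto
    show "mcont ({0..1} \<times> XX) ?H"
    proof (rule htp_from_F[OF ck])
      fix t s \<phi> assume t: "t \<in> {0..1::real}" and s: "s \<in> sphere (0::'v) 1" and \<phi>: "\<phi> \<in> {0..1::real}"
      show "?H (t, s, E \<phi>) = y (s, E (?k (t, s, \<phi>)))"
      proof (cases "\<phi> < 1")
        case True
        then show ?thesis using \<phi> by (simp add: th_E)
      next
        case False
        then have "\<phi> = 1" using \<phi> by simp
        moreover have "E ((1 - t) * h 1 + t * g 1) = 1"
          using hg h unfolding okh_def by (simp add: algebra_simps E_int')
        ultimately show ?thesis using h g by (simp add: okh_def)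
      qed
    qed
  next
    fix t x assume "t \<in> {0..1::real}" "x \<in> XX"
    then show "unitary_mat n (?H (t, x))" using y_unit E_circle by (cases x) auto
  next
    fix x assume "x \<in> XX"
    show "?H (0, x) = Mh y h x" by (simp add: Mh_def)
  next
    fix x assume "x \<in> XX"
    show "?H (1, x) = Mh y g x" by (simp add: Mh_def)
  next
    fix t x assume "t \<in> {0..1::real}" "x \<in> BB"
    then show "?H (t, x) = idm n"
      using h g y_1 y_e E_circle by (auto simp: okh_def)
  qed
qed

lemma BB_XX: "BB \<subseteq> XX" using e by auto

lemma Mh_valid: "okh h \<Longrightarrow> valid n XX BB (Mh y h)"
  using ghtp_valid(1)[OF lin_htp[of h h] BB_XX] by auto

lemma Mh_0: "x \<in> XX \<Longrightarrow> Mh y (\<lambda>\<phi>. 0) x = idm n"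
  using y_1 by (cases x) (auto simp: Mh_def)

lemma Mh_id: "x \<in> XX \<Longrightarrow> Mh y (\<lambda>\<phi>. \<phi>) x = y x"
  by (cases x) (auto simp: Mh_def E_th)


lemma add_htp:
  assumes f: "okh f" and g: "okh g"
  shows "ghtp n XX BB (\<lambda>x. mmult n (Mh y f x) (Mh y g x)) (Mh y (\<lambda>\<phi>. f \<phi> + g \<phi>))"
proof -
  define r1 where "r1 = (\<lambda>\<phi>::real. min (2 * \<phi>) 1)"
  define r2 where "r2 = (\<lambda>\<phi>::real. max (2 * \<phi> - 1) 0)"
  have cf: "continuous_on {0..1} f" and cg: "continuous_on {0..1} g" using f g by (auto simp: okh_def)
  have r1c: "continuous_on {0..1} r1" "r1 ` {0..1} \<subseteq> {0..1}" unfolding r1_def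
    by (auto intro!: continuous_intros)
  have r2c: "continuous_on {0..1} r2" "r2 ` {0..1} \<subseteq> {0..1}" unfolding r2_def
    by (auto intro!: continuous_intros)
  have f1: "okh (\<lambda>\<phi>. f (r1 \<phi>))"
    using f continuous_on_compose2[OF cf r1c] by (simp add: okh_def r1_def)
  have g2: "okh (\<lambda>\<phi>. g (r2 \<phi>))"
    using g continuous_on_compose2[OF cg r2c] by (simp add: okh_def r2_def)
  have fg12: "okh (\<lambda>\<phi>. f (r1 \<phi>) + g (r2 \<phi>))"
    using f1 g2 by (auto simp: okh_def intro!: continuous_intros)
  have fg: "okh (\<lambda>\<phi>. f \<phi> + g \<phi>)"
    using f g by (auto simp: okh_def intro!: continuous_intros)
  have h1: "ghtp n XX BB (Mh y f) (Mh y (\<lambda>\<phi>. f (r1 \<phi>)))"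
    by (rule lin_htp[OF f f1]) (simp add: r1_def)
  have h2: "ghtp n XX BB (Mh y g) (Mh y (\<lambda>\<phi>. g (r2 \<phi>)))"
    by (rule lin_htp[OF g g2]) (simp add: r2_def)
  note h3 = ghtp_mult[OF h1 h2]
  have eq: "mmult n (Mh y (\<lambda>\<phi>. f (r1 \<phi>)) x) (Mh y (\<lambda>\<phi>. g (r2 \<phi>)) x) = Mh y (\<lambda>\<phi>. f (r1 \<phi>) + g (r2 \<phi>)) x"
    if x: "x \<in> XX" for x
  proof -
    obtain s z where sz: "x = (s, z)" "s \<in> sphere 0 1" "z \<in> circle" using x by auto
    let ?\<phi> = "th z"
    show ?thesis
    proof (cases "2 * ?\<phi> \<le> 1")
      case True
      then have "r1 ?\<phi> = 2 * ?\<phi>" "r2 ?\<phi> = 0" by (auto simp: r1_def r2_def)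
      moreover have "g 0 = 0" using g by (simp add: okh_def)
      moreover have "mwf n (y (s, E (f (2 * ?\<phi>))))" using y_unit sz E_circle unitary_wf by blast
      ultimately show ?thesis using sz y_1 by (simp add: Mh_def mmult_idm_right)
    next
      case False
      then have "r1 ?\<phi> = 1" "r2 ?\<phi> = 2 * ?\<phi> - 1" by (auto simp: r1_def r2_def)
      moreover have "f 1 \<in> \<int>" using f by (simp add: okh_def)
      moreover have "mwf n (y (s, E (g (2 * ?\<phi> - 1))))" using y_unit sz E_circle unitary_wf by blast
      ultimately show ?thesis using sz y_1 E_shift[of "f 1" "g (2 * ?\<phi> - 1)"]
        by (simp add: Mh_def mmult_idm_left E_int' add.commute)
    qed
  qed
  have h4: "ghtp n XX BB (\<lambda>x. mmult n (Mh y f x) (Mh y g x)) (Mh y (\<lambda>\<phi>. f (r1 \<phi>) + g (r2 \<phi>)))"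
    by (rule ghtp_cong[OF h3]) (simp_all add: eq)
  have h5: "ghtp n XX BB (Mh y (\<lambda>\<phi>. f (r1 \<phi>) + g (r2 \<phi>))) (Mh y (\<lambda>\<phi>. f \<phi> + g \<phi>))"
    by (rule lin_htp[OF fg12 fg]) (simp add: r1_def r2_def)
  show ?thesis by (rule ghtp_trans[OF h4 h5])
qed

lemma okh_sum: "(\<And>p. p < m \<Longrightarrow> okh (hs p)) \<Longrightarrow> okh (\<lambda>\<phi>. \<Sum>p<m. hs p \<phi>)"
  unfolding okh_def by (auto intro!: continuous_on_sum Ints_sum sum.neutral)

lemma mprod_Mh:
  assumes "\<And>p. p < m \<Longrightarrow> okh (hs p)"
  shows "ghtp n XX BB (\<lambda>x. mprod n (\<lambda>p. Mh y (hs p) x) m) (Mh y (\<lambda>\<phi>. \<Sum>p<m. hs p \<phi>))"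
  using assms
proof (induction m)
  case 0
  show ?case by (rule ghtp_cong[OF ghtp_refl[OF valid_idm]]) (simp_all add: Mh_0)
next
  case (Suc m)
  have ok: "okh (hs m)" using Suc.prems by simp
  have oks: "okh (\<lambda>\<phi>. \<Sum>p<m. hs p \<phi>)" using Suc.prems by (intro okh_sum) auto
  have a: "ghtp n XX BB (\<lambda>x. mmult n (Mh y (hs m) x) (mprod n (\<lambda>p. Mh y (hs p) x) m))
                        (\<lambda>x. mmult n (Mh y (hs m) x) (Mh y (\<lambda>\<phi>. \<Sum>p<m. hs p \<phi>) x))"
    using Suc by (intro ghtp_mult ghtp_refl Mh_valid ok) auto
  have b: "ghtp n XX BB (\<lambda>x. mmult n (Mh y (hs m) x) (Mh y (\<lambda>\<phi>. \<Sum>p<m. hs p \<phi>) x))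
                        (Mh y (\<lambda>\<phi>. hs m \<phi> + (\<Sum>p<m. hs p \<phi>)))"
    by (rule add_htp[OF ok oks])
  have "(\<lambda>\<phi>. hs m \<phi> + (\<Sum>p<m. hs p \<phi>)) = (\<lambda>\<phi>. \<Sum>p<Suc m. hs p \<phi>)"
    by (simp add: add.commute)
  then show ?case using ghtp_trans[OF a b] by simp
qed


lemma mpow_idm: "mpow k (idm k) N = idm k"
  by (induction N) (auto simp: mmult_idm_left)

lemma valid_mpow: "valid k X B F \<Longrightarrow> valid k X B (\<lambda>x. mpow k (F x) N)"
  by (auto simp: valid_def intro: mcont_mpow unitary_mpow simp: mpow_idm)

lemma okh_lin: "c \<in> \<int> \<Longrightarrow> okh (\<lambda>\<phi>. c * \<phi>)"
  by (auto simp: okh_def intro!: continuous_intros)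

lemma pow_pos: "ghtp n XX BB (Mh y (\<lambda>\<phi>. real m * \<phi>)) (\<lambda>x. mpow n (y x) m)"
proof (induction m)
  case 0
  show ?case by (rule ghtp_cong[OF ghtp_refl[OF valid_idm]]) (simp_all add: Mh_0)
next
  case (Suc m)
  have okid: "okh (\<lambda>\<phi>. \<phi>)" using okh_lin[of 1] by simp
  have okm: "okh (\<lambda>\<phi>. real m * \<phi>)" by (rule okh_lin) simp
  have a: "ghtp n XX BB (\<lambda>x. mmult n (Mh y (\<lambda>\<phi>. \<phi>) x) (Mh y (\<lambda>\<phi>. real m * \<phi>) x)) (Mh y (\<lambda>\<phi>. \<phi> + real m * \<phi>))"
    by (rule add_htp[OF okid okm])
  have r: "ghtp n XX BB (Mh y (\<lambda>\<phi>. \<phi>)) y"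
    by (rule ghtp_cong[OF ghtp_refl[OF Mh_valid[OF okid]]]) (simp_all add: Mh_id)
  have b: "ghtp n XX BB (\<lambda>x. mmult n (Mh y (\<lambda>\<phi>. \<phi>) x) (Mh y (\<lambda>\<phi>. real m * \<phi>) x)) (\<lambda>x. mmult n (y x) (mpow n (y x) m))"
    by (rule ghtp_mult[OF r Suc.IH])
  have c: "ghtp n XX BB (Mh y (\<lambda>\<phi>. \<phi> + real m * \<phi>)) (\<lambda>x. mmult n (y x) (mpow n (y x) m))"
    by (rule ghtp_trans[OF ghtp_sym[OF a] b])
  have "(\<lambda>\<phi>. \<phi> + real m * \<phi>) = (\<lambda>\<phi>. real (Suc m) * \<phi>)"
    by (auto simp: algebra_simps)
  then show ?case using c by simp
qed

lemma pow_neg: "ghtp n XX BB (Mh y (\<lambda>\<phi>. - real m * \<phi>)) (\<lambda>x. mpow n (madj (y x)) m)"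
proof -
  let ?P = "Mh y (\<lambda>\<phi>. - real m * \<phi>)"
  let ?Q = "Mh y (\<lambda>\<phi>. real m * \<phi>)"
  have okn: "okh (\<lambda>\<phi>. - real m * \<phi>)" by (rule okh_lin) simp
  have okm: "okh (\<lambda>\<phi>. real m * \<phi>)" by (rule okh_lin) simp
  have vP: "valid n XX BB ?P" by (rule Mh_valid[OF okn])
  have vZ: "valid n XX BB (\<lambda>x. mpow n (madj (y x)) m)" by (rule valid_mpow[OF valid_madj[OF vy]])
  have c1: "ghtp n XX BB (\<lambda>x. mmult n (?P x) (mpow n (y x) m)) (\<lambda>x. mmult n (?P x) (?Q x))"
    by (rule ghtp_mult[OF ghtp_refl[OF vP] ghtp_sym[OF pow_pos]])
  have c2: "ghtp n XX BB (\<lambda>x. mmult n (?P x) (?Q x)) (Mh y (\<lambda>\<phi>. - real m * \<phi> + real m * \<phi>))"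
    by (rule add_htp[OF okn okm])
  note c4 = ghtp_mult[OF ghtp_trans[OF c1 c2] ghtp_refl[OF vZ]]
  show ?thesis
  proof (rule ghtp_cong[OF c4])
    fix x assume x: "x \<in> XX"
    have u: "unitary_mat n (y x)" using x y_unit by auto
    have "mwf n (?P x)" using vP x unitary_wf by (auto simp: valid_def)
    then show "mmult n (mmult n (?P x) (mpow n (y x) m)) (mpow n (madj (y x)) m) = ?P x"
      using mpow_madj_cancel[OF u, of m] by (simp add: mmult_assoc mmult_idm_right)
    show "mmult n (Mh y (\<lambda>\<phi>. - real m * \<phi> + real m * \<phi>) x) (mpow n (madj (y x)) m) = mpow n (madj (y x)) m"
      using Mh_0[OF x] by (simp add: mmult_idm_left)
  qed
qed

lemma pow_int: "ghtp n XX BB (Mh y (\<lambda>\<phi>. of_int k * \<phi>)) (\<lambda>x. mzpow n (y x) k)"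
proof (cases "0 \<le> k")
  case True
  then obtain m where "k = int m" by (metis nonneg_eq_int)
  then show ?thesis using pow_pos[of m] by (simp add: mzpow_def)
next
  case False
  then obtain m where "k = - int m" by (metis nonneg_eq_int neg_0_le_iff_le nle_le minus_minus)
  then show ?thesis using pow_neg[of m] False by (simp add: mzpow_def)
qed

end

lemma circlepath_E: "circlepath 0 1 = E"
  by (simp add: circlepath E_def fun_eq_iff)

lemma lam_lift:
  fixes lam :: "complex \<Rightarrow> complex"
  assumes c: "continuous_on circle lam" and im: "lam ` circle \<subseteq> circle" and l1: "lam 1 = 1"
  obtains h where "okh h" "h 1 = of_int (wind lam)" "\<And>\<phi>. \<phi> \<in> {0..1} \<Longrightarrow> lam (E \<phi>) = E (h \<phi>)"
proof -
  let ?g = "lam \<circ> circlepath 0 1"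
  have g: "?g = (\<lambda>t. lam (E t))" by (simp add: circlepath_E comp_def)
  have pg: "path ?g" unfolding g path_def
    by (rule continuous_on_compose2[OF c]) (auto intro!: continuous_intros simp: E_circle)
  have pim: "path_image ?g \<subseteq> circle" unfolding g path_image_def using im E_circle by auto
  then have z: "0 \<notin> path_image ?g" by auto
  have closed: "pathfinish ?g = pathstart ?g" unfolding g pathfinish_def pathstart_def by simp
  obtain k0 :: int where k0: "winding_number ?g 0 = of_int k0"
    using integer_winding_number_eq[OF pg z] closed by (metis Ints_cases)
  have W: "winding_number ?g 0 = of_int (wind lam)"
  proof -
    have "wind lam = k0" unfolding wind_def
      by (rule the_equality) (use k0 in auto)
    then show ?thesis using k0 by simp
  qed
  obtain q where q: "path q" "pathfinish q - pathstart q = 2 * of_real pi * \<i> * winding_number ?g 0"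
      "\<And>t. t \<in> {0..1} \<Longrightarrow> ?g t = 0 + exp (q t)"
    using winding_number_as_continuous_log[OF pg z] by blast
  define h where "h = (\<lambda>t. (Im (q t) - Im (q 0)) / (2 * pi))"
  have re0: "Re (q t) = 0" if t: "t \<in> {0..1}" for t
  proof -
    have "norm (exp (q t)) = 1" using q(3)[OF t] pim t unfolding path_image_def by force
    then show ?thesis by simp
  qed
  have qi: "q t = \<i> * of_real (Im (q t))" if t: "t \<in> {0..1}" for t
    using re0[OF t] by (simp add: complex_eq_iff)
  have eq0: "exp (q 0) = 1" using q(3)[of 0] by (simp add: g l1)
  show ?thesis
  proof
    have "continuous_on {0..1} q" using q(1) by (simp add: path_def)
    then have "continuous_on {0..1} h" unfolding h_def by (intro continuous_intros) auto
    moreover have "h 1 = of_int (wind lam)"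
    proof -
      have "q 1 - q 0 = 2 * of_real pi * \<i> * of_int (wind lam)" using q(2) W by (simp add: pathfinish_def pathstart_def)
      then have "Im (q 1 - q 0) = 2 * pi * of_int (wind lam)" by simp
      then show ?thesis by (simp add: h_def)
    qed
    ultimately show "okh h" "h 1 = of_int (wind lam)" by (auto simp: okh_def h_def)
  next
    fix \<phi> :: real assume \<phi>: "\<phi> \<in> {0..1}"
    have pi0: "complex_of_real pi \<noteq> 0" by simp
    have "2 * complex_of_real pi * \<i> * complex_of_real ((Im (q \<phi>) - Im (q 0)) / (2 * pi))
        = 2 * complex_of_real pi * \<i> * ((complex_of_real (Im (q \<phi>)) - complex_of_real (Im (q 0))) / (2 * complex_of_real pi))"
      by simp
    also have "\<dots> = \<i> * of_real (Im (q \<phi>)) - \<i> * of_real (Im (q 0))"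
      using pi0 by (simp add: field_simps)
    finally have "E (h \<phi>) = exp (\<i> * of_real (Im (q \<phi>)) - \<i> * of_real (Im (q 0)))"
      unfolding E_def h_def by simp
    also have "\<dots> = exp (q \<phi> - q 0)" using qi[OF \<phi>] qi[of 0] by simp
    also have "\<dots> = exp (q \<phi>)" by (simp add: exp_diff eq0)
    also have "\<dots> = lam (E \<phi>)" using q(3)[OF \<phi>] g by simp
    finally show "lam (E \<phi>) = E (h \<phi>)" by simp
  qed
qed

lemma ycoord_eq: "ycoord k U x = mmult k (U x) (madj (U (fst x, 1)))"
  by (cases x) (simp add: ycoord_def)

lemma valid_cong: assumes "valid k X B F" "\<And>x. x \<in> X \<Longrightarrow> F x = G x" "B \<subseteq> X" shows "valid k X B G"
proof -
  have "\<forall>x\<in>B. G x = idm k" using assms unfolding valid_def by (metis subsetD)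
  then show ?thesis using assms unfolding valid_def by (auto intro: mcont_cong)
qed

lemma part_y:
  fixes e :: "'v::euclidean_space"
  assumes n: "1 \<le> n" and a: "1 \<le> a" and nal: "n * a \<le> l"
    and lam: "\<forall>p<a. continuous_on circle (lam p) \<and> lam p ` circle \<subseteq> circle \<and> lam p 1 = 1"
    and e: "e \<in> sphere 0 1"
    and U: "ct_map n e U"
  shows "cs_rat_eq l e (ycoord l (phi_u n l a lam U))
            (\<lambda>x. mzpow l (corner n l (ycoord n U x)) (\<Sum>p<a. wind (lam p)))"
proof -
  have n0: "0 < n" using n by simp
  have "n \<le> n * a" using a by simp
  then have nl: "n \<le> l" using nal by linarith
  let ?X = "sphere (0::'v) 1 \<times> circle"
  let ?B = "sphere (0::'v) 1 \<times> {1} \<union> {e} \<times> circle"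
  let ?y = "ycoord n U"
  let ?b = "\<Sum>p<a. wind (lam p)"
  have one: "(1::complex) \<in> circle" by simp
  have BX: "?B \<subseteq> ?X" using e by auto
  have Uc: "mcont ?X U" and Uu: "\<And>s z. s \<in> sphere 0 1 \<Longrightarrow> z \<in> circle \<Longrightarrow> unitary_mat n (U (s, z))"
    and Ue: "\<And>z. z \<in> circle \<Longrightarrow> U (e, z) = idm n"
    using U by (auto simp: ct_map_def)
  have vy: "valid n ?X ?B ?y"
    unfolding valid_def
  proof (intro conjI ballI)
    have "mcont ?X (\<lambda>x. U (fst x, 1))"
      by (rule mcont_compose[OF Uc]) (auto intro!: continuous_intros)
    then show "mcont ?X ?y"
      unfolding ycoord_eq by (intro mcont_mmult Uc mcont_madj)
  next
    fix x assume "x \<in> ?X"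
    then show "unitary_mat n (?y x)" using Uu one
      by (cases x) (auto simp: ycoord_def intro!: unitary_mmult unitary_madj)
  next
    fix x assume x: "x \<in> ?B"
    show "?y x = idm n"
    proof (cases "snd x = 1")
      case True
      then obtain s where "x = (s, 1)" "s \<in> sphere 0 1" using x e by (cases x) auto
      then show ?thesis using Uu[of s 1] one by (simp add: ycoord_def unitary_iff)
    next
      case False
      then obtain z where "x = (e, z)" "z \<in> circle" using x by (cases x) auto
      then show ?thesis using Ue one by (simp add: ycoord_def mmult_idm_left)
    qed
  qed
  have "\<forall>p\<in>{..<a}. \<exists>h. okh h \<and> h 1 = of_int (wind (lam p)) \<and> (\<forall>\<phi>\<in>{0..1}. lam p (E \<phi>) = E (h \<phi>))"
  proof
    fix p assume "p \<in> {..<a}"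
    then have c3: "continuous_on circle (lam p)" "lam p ` circle \<subseteq> circle" "lam p 1 = 1" using lam by auto
    obtain h where "okh h" "h 1 = of_int (wind (lam p))" "\<And>\<phi>. \<phi> \<in> {0..1} \<Longrightarrow> lam p (E \<phi>) = E (h \<phi>)"
      using lam_lift[OF c3] by blast
    then show "\<exists>h. okh h \<and> h 1 = of_int (wind (lam p)) \<and> (\<forall>\<phi>\<in>{0..1}. lam p (E \<phi>) = E (h \<phi>))" by blast
  qed
  then obtain hs where hs: "\<And>p. p < a \<Longrightarrow> okh (hs p)" "\<And>p. p < a \<Longrightarrow> hs p 1 = of_int (wind (lam p))"
      "\<And>p \<phi>. p < a \<Longrightarrow> \<phi> \<in> {0..1} \<Longrightarrow> lam p (E \<phi>) = E (hs p \<phi>)"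
    using bchoice[of "{..<a}"] by (metis lessThan_iff)
  have lamM: "?y (fst x, lam p (snd x)) = Mh ?y (hs p) x" if pa: "p < a" and xX: "x \<in> ?X" for p x
  proof -
    obtain s z where sz: "x = (s, z)" "z \<in> circle" using xX by (cases x) auto
    have "lam p z = lam p (E (th z))" using sz E_th by simp
    also have "\<dots> = E (hs p (th z))" using hs(3)[OF pa] th_range[of z] by auto
    finally show ?thesis using sz by (simp add: Mh_def)
  qed
  have vA: "valid n ?X ?B (Mh ?y (hs p))" if "p < a" for p
    using Mh_valid[OF n0 e vy hs(1)[OF that]] .
  have S1: "ghtp l ?X ?B (\<lambda>x. bd n l a (\<lambda>p. Mh ?y (hs p) x)) (\<lambda>x. mprod l (\<lambda>p. corner n l (Mh ?y (hs p) x)) a)"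
    by (rule bd_htp[OF n0 nal vA])
  have S2: "ghtp n ?X ?B (\<lambda>x. mprod n (\<lambda>p. Mh ?y (hs p) x) a) (Mh ?y (\<lambda>\<phi>. \<Sum>p<a. hs p \<phi>))"
    by (rule mprod_Mh[OF n0 e vy hs(1)])
  have oks: "okh (\<lambda>\<phi>. \<Sum>p<a. hs p \<phi>)" by (rule okh_sum[OF n0 e vy hs(1)])
  have okb: "okh (\<lambda>\<phi>. of_int ?b * \<phi>)" by (rule okh_lin[OF n0 e vy]) (rule Ints_of_int)
  have S3: "ghtp n ?X ?B (Mh ?y (\<lambda>\<phi>. \<Sum>p<a. hs p \<phi>)) (Mh ?y (\<lambda>\<phi>. of_int ?b * \<phi>))"
    by (rule lin_htp[OF n0 e vy oks okb]) (simp add: hs(2))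
  have S4: "ghtp n ?X ?B (Mh ?y (\<lambda>\<phi>. of_int ?b * \<phi>)) (\<lambda>x. mzpow n (?y x) ?b)"
    by (rule pow_int[OF n0 e vy])
  note S234 = ghtp_trans[OF S2 ghtp_trans[OF S3 S4]]
  have S5: "ghtp l ?X ?B (\<lambda>x. corner n l (mprod n (\<lambda>p. Mh ?y (hs p) x) a)) (\<lambda>x. corner n l (mzpow n (?y x) ?b))"
    by (rule ghtp_map[OF S234]) (auto intro: mcont_corner unitary_corner[OF _ n0 nl] simp: corner_idm[OF n0 nl])
  have S15: "ghtp l ?X ?B (\<lambda>x. bd n l a (\<lambda>p. Mh ?y (hs p) x)) (\<lambda>x. corner n l (mzpow n (?y x) ?b))"
  proof -
    have "ghtp l ?X ?B (\<lambda>x. bd n l a (\<lambda>p. Mh ?y (hs p) x)) (\<lambda>x. corner n l (mprod n (\<lambda>p. Mh ?y (hs p) x) a))"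
      using S1 mprod_corner[OF n0 nl] by simp
    then show ?thesis using S5 by (rule ghtp_trans)
  qed
  have final: "ghtp l ?X ?B (\<lambda>x. mpow l (ycoord l (phi_u n l a lam U) x) 1) (\<lambda>x. mpow l (mzpow l (corner n l (?y x)) ?b) 1)"
  proof (rule ghtp_cong[OF S15])
    fix x assume x: "x \<in> ?X"
    obtain s z where sz: "x = (s, z)" using x by (cases x)
    have "ycoord l (phi_u n l a lam U) x = mmult l (bd n l a (\<lambda>p. U (s, lam p z))) (madj (bd n l a (\<lambda>p. U (s, lam p 1))))"
      by (simp add: ycoord_def sz phi_u_bd)
    also have "\<dots> = bd n l a (\<lambda>p. mmult n (U (s, lam p z)) (madj (U (s, lam p 1))))"
      by (simp add: bd_madj bd_mult[OF nal n0])
    also have "\<dots> = bd n l a (\<lambda>p. Mh ?y (hs p) x)"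
    proof (rule bd_cong[OF _ n0])
      fix p assume p: "p < a"
      have "mmult n (U (s, lam p z)) (madj (U (s, lam p 1))) = ?y (fst x, lam p (snd x))"
        using lam p by (simp add: sz ycoord_def)
      then show "mmult n (U (s, lam p z)) (madj (U (s, lam p 1))) = Mh ?y (hs p) x"
        using lamM[OF p x] by simp
    qed
    finally have "ycoord l (phi_u n l a lam U) x = bd n l a (\<lambda>p. Mh ?y (hs p) x)" .
    moreover have "mwf l (ycoord l (phi_u n l a lam U) x)" by (simp add: ycoord_eq)
    ultimately show "bd n l a (\<lambda>p. Mh ?y (hs p) x) = mpow l (ycoord l (phi_u n l a lam U) x) 1"
      using mmult_idm_right by simp
    have "mwf l (mzpow l (corner n l (?y x)) ?b)" by (simp add: mzpow_def)
    then show "corner n l (mzpow n (?y x) ?b) = mpow l (mzpow l (corner n l (?y x)) ?b) 1"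
      using mmult_idm_right corner_mzpow[OF n0 nl] by simp
  qed
  show ?thesis unfolding cs_rat_eq_def cs_htp_ghtp[OF e]
    by (intro exI[of _ 1]) (use final in simp)
qed

theorem proposition4p2:
  fixes n l a :: nat
    and lam :: "nat \<Rightarrow> complex \<Rightarrow> complex"
    and e :: "'v::euclidean_space"
    and U :: "'v \<times> complex \<Rightarrow> cmat"
  assumes "n \<ge> 1" and "l \<ge> 1" and "a \<ge> 1" and "n * a \<le> l"
    and "\<forall>p<a. continuous_on circle (lam p) \<and> lam p ` circle \<subseteq> circle \<and> lam p 1 = 1"
    and "DIM('v) \<ge> 2"
    and "e \<in> sphere 0 1"
    and "ct_map n e U"
  shows "pi_rat_eq l e (xcoord (phi_u n l a lam U))
            (\<lambda>s. mpow l (corner n l (xcoord U s)) a)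
       \<and> cs_rat_eq l e (ycoord l (phi_u n l a lam U))
            (\<lambda>x. mzpow l (corner n l (ycoord n U x)) (\<Sum>p<a. wind (lam p)))"
  using part_x[OF assms(1,3,4,5,8)] part_y[OF assms(1,3,4,5,7,8)] by blast

end
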